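(* For every $K\in\mathcal K(\mathcal H)^{ah}$ and $t\in\mathbb R$, $$\inf_{D\in\mathcal D(\mathcal B(\mathcal H))^{ah}}\|K+D\|=\inf_{\substack{d\in\mathcal D(\mathcal K(\mathcal H))^{ah}\\ \theta\in\mathbb R}}\|K+itI+d+i\theta I\|=\inf_{d\in\mathcal D(\mathcal K(\mathcal H))^{ah}}\|K+d\|.$$ Consequently the Finsler norm $\|Xb-bX\|_b$ for $X\in(\mathcal K+\mathbb C)^{ah}$ coincides with the quotient norm of the class of $X$ in each of $\mathcal K(\mathcal H)^{ah}/\mathcal D(\mathcal K(\mathcal H))^{ah}$ (after subtracting the scalar part), $(\mathcal K+\mathbb C)^{ah}/\mathcal D(\mathcal K+\mathbb C)^{ah}$, and $(\mathcal K(\mathcal H)^{ah}+\mathcal D(\mathcal B(\mathcal H))^{ah})/\mathcal D(\mathcal B(\mathcal H))^{ah}$.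
   Context: $\mathcal H$ is a separable infinite-dimensional Hilbert space with fixed orthonormal basis $\{e_i\}$; $\mathcal K(\mathcal H)$ compact operators; $ah$ = anti-Hermitian; $\mathcal D(\mathcal B(\mathcal H))$ bounded diagonal operators, $\mathcal D(\mathcal K(\mathcal H))=\mathcal D(\mathcal B(\mathcal H))\cap\mathcal K(\mathcal H)$; $\mathcal K+\mathbb C=\{K+\lambda I\}$, $\mathcal D(\mathcal K+\mathbb C)=\mathcal D(\mathcal K(\mathcal H))+\mathbb CI$. For $b$ a compact self-adjoint diagonal operator with pairwise distinct diagonal entries and $x=Xb-bX$ with $X\in(\mathcal K+\mathbb C)^{ah}$, $\|x\|_b=\inf\{\|Y\|:Y\in(\mathcal K+\mathbb C)^{ah},\ Yb-bY=x\}$. Quotient norms are the usual infimum norms. *)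

theory Defs
  imports Complex_Main
begin

text \<open>Model: the separable infinite-dimensional Hilbert space with fixed orthonormal
basis is realised as l2(nat), vectors being square-summable functions nat => complex,
with basis vectors e i.  Operators are maps on such functions; only their behaviour on
l2 vectors matters (equality of operators is equality on l2).\<close>

type_synonym vec = "nat \<Rightarrow> complex"
type_synonym op = "vec \<Rightarrow> vec"

definition l2 :: "vec \<Rightarrow> bool" where
  "l2 x \<longleftrightarrow> summable (\<lambda>n. (cmod (x n))^2)"

definition l2norm :: "vec \<Rightarrow> real" where
  "l2norm x = sqrt (\<Sum>n. (cmod (x n))^2)"

definition l2inner :: "vec \<Rightarrow> vec \<Rightarrow> complex" where
  "l2inner x y = (\<Sum>n. x n * cnj (y n))"

definition basis_vec :: "nat \<Rightarrow> vec" where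
  "basis_vec i = (\<lambda>n. if n = i then 1 else 0)"

definition op_eq :: "op \<Rightarrow> op \<Rightarrow> bool" where
  "op_eq S T \<longleftrightarrow> (\<forall>x. l2 x \<longrightarrow> S x = T x)"

definition op_add :: "op \<Rightarrow> op \<Rightarrow> op" where
  "op_add S T = (\<lambda>x n. S x n + T x n)"

definition op_sub :: "op \<Rightarrow> op \<Rightarrow> op" where
  "op_sub S T = (\<lambda>x n. S x n - T x n)"

definition op_scalar :: "complex \<Rightarrow> op" where
  "op_scalar c = (\<lambda>x n. c * x n)"

definition op_comm :: "op \<Rightarrow> op \<Rightarrow> op" where
  "op_comm X b = op_sub (X \<circ> b) (b \<circ> X)"

definition bounded_op :: "op \<Rightarrow> bool" where
  "bounded_op T \<longleftrightarrow>
     (\<forall>x. l2 x \<longrightarrow> l2 (T x)) \<and>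
     (\<forall>x y. l2 x \<longrightarrow> l2 y \<longrightarrow> T (\<lambda>n. x n + y n) = (\<lambda>n. T x n + T y n)) \<and>
     (\<forall>c x. l2 x \<longrightarrow> T (\<lambda>n. c * x n) = (\<lambda>n. c * T x n)) \<and>
     (\<exists>C. \<forall>x. l2 x \<longrightarrow> l2norm (T x) \<le> C * l2norm x)"

definition op_norm :: "op \<Rightarrow> real" where
  "op_norm T = Sup {l2norm (T x) | x. l2 x \<and> l2norm x \<le> 1}"

text \<open>compact: the image of every sequence in the closed unit ball has a Cauchy
(hence, l2 being complete, convergent) subsequence\<close>
definition compact_op :: "op \<Rightarrow> bool" where
  "compact_op T \<longleftrightarrow> bounded_op T \<and>
     (\<forall>xs :: nat \<Rightarrow> vec. (\<forall>k. l2 (xs k) \<and> l2norm (xs k) \<le> 1) \<longrightarrow>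
        (\<exists>r::nat \<Rightarrow> nat. strict_mono r \<and>
           (\<forall>\<epsilon>::real>0. \<exists>N::nat. \<forall>m\<ge>N. \<forall>n\<ge>N.
               l2norm (\<lambda>i. T (xs (r m)) i - T (xs (r n)) i) < \<epsilon>)))"

definition antiherm_op :: "op \<Rightarrow> bool" where
  "antiherm_op T \<longleftrightarrow> (\<forall>x y. l2 x \<longrightarrow> l2 y \<longrightarrow> l2inner (T x) y = - l2inner x (T y))"

definition selfadj_op :: "op \<Rightarrow> bool" where
  "selfadj_op T \<longleftrightarrow> (\<forall>x y. l2 x \<longrightarrow> l2 y \<longrightarrow> l2inner (T x) y = l2inner x (T y))"

definition diag_op :: "op \<Rightarrow> bool" where
  "diag_op T \<longleftrightarrow> bounded_op T \<and> (\<forall>i. \<exists>c. T (basis_vec i) = (\<lambda>n. c * basis_vec i n))"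

definition KC_op :: "op \<Rightarrow> bool" where
  "KC_op X \<longleftrightarrow> (\<exists>K0 c0. compact_op K0 \<and> op_eq X (op_add K0 (op_scalar c0)))"

definition Kah :: "op set" where "Kah = {K. compact_op K \<and> antiherm_op K}"
definition DBah :: "op set" where "DBah = {D. diag_op D \<and> antiherm_op D}"
definition DKah :: "op set" where "DKah = {D. diag_op D \<and> compact_op D \<and> antiherm_op D}"
definition KCah :: "op set" where "KCah = {X. bounded_op X \<and> KC_op X \<and> antiherm_op X}"
definition DKCah :: "op set" where "DKCah = {D. diag_op D \<and> KC_op D \<and> antiherm_op D}"

definition finsler_norm :: "op \<Rightarrow> op \<Rightarrow> real" where
  "finsler_norm b x = Inf {op_norm Y | Y. Y \<in> KCah \<and> op_eq (op_comm Y b) x}"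

end

theory Submission
  imports Defs "HOL-Analysis.Analysis"
begin


lemma l2_bound:
  assumes "\<And>n. (\<Sum>k<n. (cmod (z k))^2) \<le> B^2" "B \<ge> 0"
  shows "l2 z \<and> l2norm z \<le> B"
proof -
  have s: "summable (\<lambda>k. (cmod (z k))^2)"
  proof (rule bounded_imp_summable[where B="B^2"])
    fix n show "(\<Sum>k\<le>n. (cmod (z k))^2) \<le> B^2"
      using assms(1)[of "Suc n"] by (simp add: lessThan_Suc_atMost)
  qed simp
  have "(\<Sum>k. (cmod (z k))^2) \<le> B^2" by (rule suminf_le_const[OF s assms(1)])
  hence "l2norm z \<le> sqrt (B^2)" unfolding l2norm_def by (rule real_sqrt_le_mono)
  thus ?thesis using s assms(2) by (simp add: l2_def)
qed

lemma l2norm_nonneg: "l2 x \<Longrightarrow> l2norm x \<ge> 0"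
  unfolding l2norm_def l2_def by (simp add: suminf_nonneg)

lemma l2norm_sq: "l2 x \<Longrightarrow> (l2norm x)^2 = (\<Sum>n. (cmod (x n))^2)"
  unfolding l2norm_def l2_def by (simp add: suminf_nonneg)

lemma l2_partial_le: "l2 x \<Longrightarrow> (\<Sum>k<n. (cmod (x k))^2) \<le> (l2norm x)^2"
  unfolding l2norm_sq by (rule sum_le_suminf) (auto simp: l2_def)

lemma L2_set_le_l2norm: "l2 x \<Longrightarrow> L2_set (\<lambda>k. cmod (x k)) {..<n} \<le> l2norm x"
proof -
  assume x: "l2 x"
  have "L2_set (\<lambda>k. cmod (x k)) {..<n} = sqrt (\<Sum>k<n. (cmod (x k))^2)" by (simp add: L2_set_def)
  also have "\<dots> \<le> sqrt ((l2norm x)^2)" using l2_partial_le[OF x] by (rule real_sqrt_le_mono)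
  also have "\<dots> = l2norm x" using l2norm_nonneg[OF x] by simp
  finally show ?thesis .
qed

lemma l2_add: assumes x: "l2 x" and y: "l2 y"
  shows "l2 (\<lambda>k. x k + y k) \<and> l2norm (\<lambda>k. x k + y k) \<le> l2norm x + l2norm y"
proof (rule l2_bound)
  fix n
  have "sqrt (\<Sum>k<n. (cmod (x k + y k))^2) = L2_set (\<lambda>k. cmod (x k + y k)) {..<n}"
    by (simp add: L2_set_def)
  also have "\<dots> \<le> L2_set (\<lambda>k. cmod (x k) + cmod (y k)) {..<n}"
    by (rule L2_set_mono) (auto simp: norm_triangle_ineq)
  also have "\<dots> \<le> L2_set (\<lambda>k. cmod (x k)) {..<n} + L2_set (\<lambda>k. cmod (y k)) {..<n}"
    by (rule L2_set_triangle_ineq)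
  also have "\<dots> \<le> l2norm x + l2norm y" using L2_set_le_l2norm[OF x, of n] L2_set_le_l2norm[OF y, of n] by simp
  finally have "sqrt (\<Sum>k<n. (cmod (x k + y k))^2) \<le> l2norm x + l2norm y" .
  thus "(\<Sum>k<n. (cmod (x k + y k))^2) \<le> (l2norm x + l2norm y)^2"
  proof -
    have S0: "0 \<le> (\<Sum>k<n. (cmod (x k + y k))^2)" by (simp add: sum_nonneg)
    have "(\<Sum>k<n. (cmod (x k + y k))^2) = (sqrt (\<Sum>k<n. (cmod (x k + y k))^2))^2" using S0 by simp
    also have "\<dots> \<le> (l2norm x + l2norm y)^2" by (rule power_mono[OF \<open>sqrt _ \<le> _\<close>]) (simp add: sum_nonneg)
    finally show ?thesis .
  qed
next
  show "0 \<le> l2norm x + l2norm y" using l2norm_nonneg x y by (simp add: add_nonneg_nonneg)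
qed

lemma l2_scale: assumes x: "l2 x"
  shows "l2 (\<lambda>k. c * x k) \<and> l2norm (\<lambda>k. c * x k) = cmod c * l2norm x"
proof -
  have "summable (\<lambda>k. (cmod c)^2 * (cmod (x k))^2)" using x unfolding l2_def by (rule summable_mult)
  hence s: "l2 (\<lambda>k. c * x k)" by (simp add: l2_def norm_mult power_mult_distrib)
  have "l2norm (\<lambda>k. c * x k) = sqrt (\<Sum>k. (cmod c)^2 * (cmod (x k))^2)"
    by (simp add: l2norm_def norm_mult power_mult_distrib)
  also have "\<dots> = sqrt ((cmod c)^2 * (\<Sum>k. (cmod (x k))^2))"
    using x unfolding l2_def by (simp add: suminf_mult)
  also have "\<dots> = cmod c * l2norm x" by (simp add: l2norm_def real_sqrt_mult)
  finally show ?thesis using s by simp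
qed

lemma l2_neg: "l2 x \<Longrightarrow> l2 (\<lambda>k. - x k) \<and> l2norm (\<lambda>k. - x k) = l2norm x"
  using l2_scale[of x "-1"] by simp

lemma l2_diff: assumes x: "l2 x" and y: "l2 y"
  shows "l2 (\<lambda>k. x k - y k) \<and> l2norm (\<lambda>k. x k - y k) \<le> l2norm x + l2norm y"
  using l2_add[OF x l2_neg[OF y, THEN conjunct1]] l2_neg[OF y] by simp

lemma l2_zero: "l2 (\<lambda>k. 0) \<and> l2norm (\<lambda>k. 0) = 0"
  by (simp add: l2_def l2norm_def)

lemma l2_mono: assumes y: "l2 y" and le: "\<And>k. cmod (x k) \<le> cmod (y k)"
  shows "l2 x \<and> l2norm x \<le> l2norm y"
proof (rule l2_bound)
  fix n
  have "(\<Sum>k<n. (cmod (x k))^2) \<le> (\<Sum>k<n. (cmod (y k))^2)"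
    by (rule sum_mono) (simp add: le power_mono)
  thus "(\<Sum>k<n. (cmod (x k))^2) \<le> (l2norm y)^2" using l2_partial_le[OF y, of n] by linarith
qed (rule l2norm_nonneg[OF y])

lemma l2_coord: "l2 x \<Longrightarrow> cmod (x k) \<le> l2norm x"
proof -
  assume x: "l2 x"
  have "(\<Sum>j<Suc k. (cmod (x j))^2) \<le> (l2norm x)^2" by (rule l2_partial_le[OF x])
  moreover have "(cmod (x k))^2 \<le> (\<Sum>j<Suc k. (cmod (x j))^2)"
    by (rule member_le_sum) auto
  ultimately have "(cmod (x k))^2 \<le> (l2norm x)^2" by linarith
  thus ?thesis using l2norm_nonneg[OF x] by (simp add: power2_le_iff_abs_le)
qed

lemma l2norm_eq0: "l2 x \<Longrightarrow> l2norm x = 0 \<Longrightarrow> x = (\<lambda>k. 0)"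
  using l2_coord by (auto intro!: ext) (metis norm_le_zero_iff)




lemma ab_le_sq: fixes a b :: real assumes "a \<ge> 0" "b \<ge> 0" shows "a * b \<le> a^2 + b^2"
proof -
  have "0 \<le> (a - b)^2" by simp
  hence "2 * a * b \<le> a^2 + b^2" by (simp add: power2_eq_square algebra_simps)
  moreover have "0 \<le> a * b" using assms by simp
  ultimately show ?thesis by linarith
qed

lemma l2_prod_summable: assumes x: "l2 x" and y: "l2 y"
  shows "summable (\<lambda>n. cmod (x n) * cmod (y n))"
proof (rule summable_comparison_test'[where g="\<lambda>n. (cmod (x n))^2 + (cmod (y n))^2" and N=0])
  fix n
  have "norm (cmod (x n) * cmod (y n)) = cmod (x n) * cmod (y n)"
    by (simp only: real_norm_def abs_mult abs_norm_cancel)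
  also have "\<dots> \<le> (cmod (x n))^2 + (cmod (y n))^2" by (rule ab_le_sq[OF norm_ge_zero norm_ge_zero])
  finally show "norm (cmod (x n) * cmod (y n)) \<le> (cmod (x n))^2 + (cmod (y n))^2" .
next
  show "summable (\<lambda>n. (cmod (x n))\<^sup>2 + (cmod (y n))\<^sup>2)"
    using x y unfolding l2_def by (rule summable_add)
qed

lemma l2_inner_summable: assumes x: "l2 x" and y: "l2 y"
  shows "summable (\<lambda>n. x n * cnj (y n))"
proof (rule summable_norm_cancel)
  have "(\<lambda>n. norm (x n * cnj (y n))) = (\<lambda>n. cmod (x n) * cmod (y n))"
    by (simp only: norm_mult complex_mod_cnj)
  thus "summable (\<lambda>n. norm (x n * cnj (y n)))" using l2_prod_summable[OF x y] by simp
qed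

lemma l2_prod_le: assumes x: "l2 x" and y: "l2 y"
  shows "(\<Sum>n. cmod (x n) * cmod (y n)) \<le> l2norm x * l2norm y"
proof (rule suminf_le_const[OF l2_prod_summable[OF x y]])
  fix n
  have "(\<Sum>k<n. cmod (x k) * cmod (y k)) = (\<Sum>k<n. \<bar>cmod (x k)\<bar> * \<bar>cmod (y k)\<bar>)" by simp
  also have "\<dots> \<le> L2_set (\<lambda>k. cmod (x k)) {..<n} * L2_set (\<lambda>k. cmod (y k)) {..<n}"
    by (rule L2_set_mult_ineq)
  also have "\<dots> \<le> l2norm x * l2norm y"
    by (rule mult_mono) (auto simp: L2_set_le_l2norm x y l2norm_nonneg)
  finally show "(\<Sum>k<n. cmod (x k) * cmod (y k)) \<le> l2norm x * l2norm y" .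
qed

lemma l2_CS: assumes x: "l2 x" and y: "l2 y"
  shows "cmod (l2inner x y) \<le> l2norm x * l2norm y"
proof -
  have "cmod (l2inner x y) \<le> (\<Sum>n. norm (x n * cnj (y n)))"
    unfolding l2inner_def
    by (rule summable_norm) (simp only: norm_mult complex_mod_cnj l2_prod_summable[OF x y])
  also have "\<dots> = (\<Sum>n. cmod (x n) * cmod (y n))" by (simp only: norm_mult complex_mod_cnj)
  also have "\<dots> \<le> l2norm x * l2norm y" by (rule l2_prod_le[OF x y])
  finally show ?thesis .
qed

lemma l2inner_self: assumes x: "l2 x" shows "l2inner x x = complex_of_real ((l2norm x)^2)"
proof -
  have "l2inner x x = (\<Sum>n. complex_of_real ((cmod (x n))^2))"
    unfolding l2inner_def by (simp only: complex_norm_square[symmetric])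
  also have "\<dots> = complex_of_real (\<Sum>n. (cmod (x n))^2)"
    using x unfolding l2_def by (rule suminf_of_real[symmetric])
  finally show ?thesis using l2norm_sq[OF x] by simp
qed

lemma l2inner_add_left: assumes "l2 x" "l2 y" "l2 z"
  shows "l2inner (\<lambda>n. x n + y n) z = l2inner x z + l2inner y z"
  unfolding l2inner_def using l2_inner_summable assms
  by (simp add: distrib_right suminf_add)

lemma l2inner_diff_left: assumes "l2 x" "l2 y" "l2 z"
  shows "l2inner (\<lambda>n. x n - y n) z = l2inner x z - l2inner y z"
  unfolding l2inner_def using l2_inner_summable assms
  by (simp add: left_diff_distrib suminf_diff)

lemma l2inner_scale_left: assumes "l2 x" "l2 z" shows "l2inner (\<lambda>n. c * x n) z = c * l2inner x z"
  unfolding l2inner_def using l2_inner_summable[OF assms] by (simp add: mult.assoc suminf_mult)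

lemma l2inner_add_right: assumes "l2 x" "l2 y" "l2 z"
  shows "l2inner x (\<lambda>n. y n + z n) = l2inner x y + l2inner x z"
  unfolding l2inner_def using l2_inner_summable assms
  by (simp add: distrib_left suminf_add)

lemma l2inner_diff_right: assumes "l2 x" "l2 y" "l2 z"
  shows "l2inner x (\<lambda>n. y n - z n) = l2inner x y - l2inner x z"
  unfolding l2inner_def using l2_inner_summable assms
  by (simp add: right_diff_distrib suminf_diff)

lemma l2inner_scale_right: assumes "l2 x" "l2 y" shows "l2inner x (\<lambda>n. c * y n) = cnj c * l2inner x y"
proof -
  have "l2inner x (\<lambda>n. c * y n) = (\<Sum>n. cnj c * (x n * cnj (y n)))"
    unfolding l2inner_def by (simp add: ac_simps)
  also have "\<dots> = cnj c * l2inner x y" unfolding l2inner_def by (rule suminf_mult[OF l2_inner_summable[OF assms]])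
  finally show ?thesis .
qed

lemma basis_vec_l2: "l2 (basis_vec i) \<and> l2norm (basis_vec i) = 1"
proof -
  have e: "(\<lambda>n. (cmod (basis_vec i n))^2) = (\<lambda>n. if n = i then 1 else 0)"
    by (auto simp: basis_vec_def)
  have "summable (\<lambda>n. if n = i then (1::real) else 0)"
    by (rule summable_finite[of "{i}"]) auto
  moreover have "(\<Sum>n. if n = i then (1::real) else 0) = 1"
    by (subst suminf_finite[of "{i}"]) auto
  ultimately show ?thesis unfolding l2_def l2norm_def e by simp
qed

lemma l2inner_basis: "l2inner x (basis_vec k) = x k"
proof -
  have "l2inner x (basis_vec k) = (\<Sum>n\<in>{k}. x n * cnj (basis_vec k n))"
    unfolding l2inner_def by (rule suminf_finite) (auto simp: basis_vec_def)
  thus ?thesis by (simp add: basis_vec_def)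
qed

lemma l2inner_basis_left: "l2inner (basis_vec k) x = cnj (x k)"
proof -
  have "l2inner (basis_vec k) x = (\<Sum>n\<in>{k}. basis_vec k n * cnj (x n))"
    unfolding l2inner_def by (rule suminf_finite) (auto simp: basis_vec_def)
  thus ?thesis by (simp add: basis_vec_def)
qed




definition Pn :: "nat \<Rightarrow> (nat \<Rightarrow> complex) \<Rightarrow> nat \<Rightarrow> complex" where "Pn n v = (\<lambda>k. if k < n then v k else 0)"
definition Qn :: "nat \<Rightarrow> (nat \<Rightarrow> complex) \<Rightarrow> nat \<Rightarrow> complex" where "Qn n v = (\<lambda>k. if k < n then 0 else v k)"

lemma Pn_l2: "l2 v \<Longrightarrow> l2 (Pn n v) \<and> l2norm (Pn n v) \<le> l2norm v"
  by (rule l2_mono) (auto simp: Pn_def)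

lemma Qn_l2: "l2 v \<Longrightarrow> l2 (Qn n v) \<and> l2norm (Qn n v) \<le> l2norm v"
  by (rule l2_mono) (auto simp: Qn_def)

lemma tail_small: assumes v: "l2 v" and e: "\<epsilon> > 0"
  shows "\<exists>n0. \<forall>n\<ge>n0. l2norm (Qn n v) < \<epsilon>"
proof -
  let ?a = "\<lambda>k. (cmod (v k))^2"
  have s: "summable ?a" using v by (simp add: l2_def)
  have "(\<lambda>n. \<Sum>k<n. ?a k) \<longlonglongrightarrow> suminf ?a" by (rule summable_LIMSEQ[OF s])
  moreover have "(\<epsilon>/2)^2 > 0" using e by simp
  ultimately obtain n0 where n0: "\<And>n. n \<ge> n0 \<Longrightarrow> dist (\<Sum>k<n. ?a k) (suminf ?a) < (\<epsilon>/2)^2"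
    by (metis LIMSEQ_def)
  have "l2norm (Qn n v) < \<epsilon>" if n: "n \<ge> n0" for n
  proof -
    have le: "(\<Sum>k<n. ?a k) \<le> suminf ?a" by (rule sum_le_suminf[OF s]) auto
    have d: "suminf ?a - (\<Sum>k<n. ?a k) < (\<epsilon>/2)^2" using n0[OF n] le by (simp add: dist_real_def)
    have "l2 (Qn n v) \<and> l2norm (Qn n v) \<le> \<epsilon>/2"
    proof (rule l2_bound)
      fix m
      have "(\<Sum>k<m. (cmod (Qn n v k))^2) \<le> suminf ?a - (\<Sum>k<n. ?a k)"
      proof (cases "m \<le> n")
        case True
        hence "(\<Sum>k<m. (cmod (Qn n v k))^2) = 0" by (auto simp: Qn_def intro!: sum.neutral)
        thus ?thesis using le by simp
      next
        case False
        have split: "{..<m} = {..<n} \<union> {n..<m}" using False by auto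
        have "(\<Sum>k<m. (cmod (Qn n v k))^2) = (\<Sum>k\<in>{n..<m}. ?a k)"
          unfolding split by (subst sum.union_disjoint) (auto simp: Qn_def)
        also have "\<dots> = (\<Sum>k<m. ?a k) - (\<Sum>k<n. ?a k)"
          unfolding split by (subst sum.union_disjoint) auto
        also have "(\<Sum>k<m. ?a k) \<le> suminf ?a" by (rule sum_le_suminf[OF s]) auto
        finally show ?thesis by simp
      qed
      thus "(\<Sum>k<m. (cmod (Qn n v k))^2) \<le> (\<epsilon>/2)^2" using d by linarith
    qed (use e in simp)
    thus ?thesis using e by linarith
  qed
  thus ?thesis by blast
qed

lemma l2inner_Pn: "l2inner (Pn n x) y = l2inner x (Pn n y)"
  unfolding l2inner_def Pn_def by (rule arg_cong[where f=suminf]) auto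

lemma l2inner_Qn: "l2inner (Qn n x) y = l2inner x (Qn n y)"
  unfolding l2inner_def Qn_def by (rule arg_cong[where f=suminf]) auto

lemma PQ_split: "x = (\<lambda>k. Pn n x k + Qn n x k)"
  by (auto simp: Pn_def Qn_def)

lemma bop_l2: "bounded_op T \<Longrightarrow> l2 x \<Longrightarrow> l2 (T x)"
  unfolding bounded_op_def by blast
lemma bop_add: "bounded_op T \<Longrightarrow> l2 x \<Longrightarrow> l2 y \<Longrightarrow> T (\<lambda>n. x n + y n) = (\<lambda>n. T x n + T y n)"
  unfolding bounded_op_def by blast
lemma bop_scale: "bounded_op T \<Longrightarrow> l2 x \<Longrightarrow> T (\<lambda>n. c * x n) = (\<lambda>n. c * T x n)"
  unfolding bounded_op_def by blast
lemma bop_bound: "bounded_op T \<Longrightarrow> \<exists>C. \<forall>x. l2 x \<longrightarrow> l2norm (T x) \<le> C * l2norm x"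
  unfolding bounded_op_def by blast

lemma bop_zero: assumes "bounded_op T" shows "T (\<lambda>k. 0) = (\<lambda>k. 0)"
  using bop_scale[OF assms l2_zero[THEN conjunct1], of 0] by simp

lemma bop_diff: assumes T: "bounded_op T" and x: "l2 x" and y: "l2 y"
  shows "T (\<lambda>n. x n - y n) = (\<lambda>n. T x n - T y n)"
proof -
  have y': "l2 (\<lambda>n. (-1) * y n)" using l2_scale[OF y] by blast
  have "T (\<lambda>n. x n - y n) = T (\<lambda>n. x n + (-1) * y n)" by simp
  also have "\<dots> = (\<lambda>n. T x n + T (\<lambda>n. (-1) * y n) n)" by (rule bop_add[OF T x y'])
  also have "\<dots> = (\<lambda>n. T x n - T y n)" using bop_scale[OF T y, of "-1"] by simp
  finally show ?thesis .
qed

lemma op_norm_set_bdd: assumes "bounded_op T"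
  shows "bdd_above {l2norm (T x) | x. l2 x \<and> l2norm x \<le> 1}"
proof -
  obtain C where C: "\<And>x. l2 x \<Longrightarrow> l2norm (T x) \<le> C * l2norm x" using bop_bound[OF assms] by blast
  have "l2norm (T x) \<le> max C 0" if "l2 x" "l2norm x \<le> 1" for x
  proof -
    have "C * l2norm x \<le> max C 0 * 1"
      by (rule order_trans[of _ "max C 0 * l2norm x"]) (auto intro!: mult_right_mono mult_left_le simp: l2norm_nonneg that)
    thus ?thesis using C[OF that(1)] by simp
  qed
  thus ?thesis unfolding bdd_above_def by blast
qed

lemma op_norm_ge: assumes "bounded_op T" "l2 x" "l2norm x \<le> 1"
  shows "l2norm (T x) \<le> op_norm T"
  unfolding op_norm_def by (rule cSup_upper[OF _ op_norm_set_bdd[OF assms(1)]]) (use assms in blast)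

lemma op_norm_nonneg: assumes "bounded_op T" shows "op_norm T \<ge> 0"
proof -
  have "l2norm (T (\<lambda>k. 0)) \<le> op_norm T" by (rule op_norm_ge[OF assms]) (simp_all add: l2_zero)
  moreover have "l2 (T (\<lambda>k. 0))" by (rule bop_l2[OF assms]) (simp add: l2_zero)
  ultimately show ?thesis using l2norm_nonneg by (meson order_trans)
qed

lemma op_norm_le: assumes "\<And>x. l2 x \<Longrightarrow> l2norm x \<le> 1 \<Longrightarrow> l2norm (T x) \<le> M"
  shows "op_norm T \<le> M"
  unfolding op_norm_def
proof (rule cSup_least)
  show "{l2norm (T x) |x. l2 x \<and> l2norm x \<le> 1} \<noteq> {}" using l2_zero by fastforce
qed (use assms in blast)

lemma op_norm_cong: assumes "op_eq S T" shows "op_norm S = op_norm T"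
proof -
  have e: "\<And>x. l2 x \<Longrightarrow> S x = T x" using assms unfolding op_eq_def by blast
  have "{l2norm (S x) |x. l2 x \<and> l2norm x \<le> 1} = {l2norm (T x) |x. l2 x \<and> l2norm x \<le> 1}"
    by (rule Collect_cong) (metis e)
  thus ?thesis unfolding op_norm_def by simp
qed

lemma bop_addI: assumes S: "bounded_op S" and T: "bounded_op T" shows "bounded_op (op_add S T)"
proof -
  obtain C1 where C1: "\<And>x. l2 x \<Longrightarrow> l2norm (S x) \<le> C1 * l2norm x" using bop_bound[OF S] by blast
  obtain C2 where C2: "\<And>x. l2 x \<Longrightarrow> l2norm (T x) \<le> C2 * l2norm x" using bop_bound[OF T] by blast
  show ?thesis unfolding bounded_op_def op_add_def
  proof (intro conjI allI impI)
    fix x assume x: "l2 x"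
    show "l2 (\<lambda>n. S x n + T x n)" using l2_add[OF bop_l2[OF S x] bop_l2[OF T x]] by blast
  next
    fix x y assume x: "l2 x" and y: "l2 y"
    show "(\<lambda>n. S (\<lambda>n. x n + y n) n + T (\<lambda>n. x n + y n) n) = (\<lambda>n. (S x n + T x n) + (S y n + T y n))"
      by (simp add: bop_add[OF S x y] bop_add[OF T x y] algebra_simps)
  next
    fix c x assume x: "l2 x"
    show "(\<lambda>n. S (\<lambda>n. c * x n) n + T (\<lambda>n. c * x n) n) = (\<lambda>n. c * (S x n + T x n))"
      by (simp add: bop_scale[OF S x] bop_scale[OF T x] algebra_simps)
  next
    show "\<exists>C. \<forall>x. l2 x \<longrightarrow> l2norm (\<lambda>n. S x n + T x n) \<le> C * l2norm x"
    proof (intro exI allI impI)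
      fix x assume x: "l2 x"
      have "l2norm (\<lambda>n. S x n + T x n) \<le> l2norm (S x) + l2norm (T x)"
        using l2_add[OF bop_l2[OF S x] bop_l2[OF T x]] by blast
      also have "\<dots> \<le> (C1 + C2) * l2norm x" using C1[OF x] C2[OF x] by (simp add: algebra_simps)
      finally show "l2norm (\<lambda>n. S x n + T x n) \<le> (C1 + C2) * l2norm x" .
    qed
  qed
qed

lemma bop_scalar: "bounded_op (op_scalar c)"
  unfolding bounded_op_def op_scalar_def
proof (intro conjI allI impI)
  fix x assume x: "l2 x"
  show "l2 (\<lambda>n. c * x n)" using l2_scale[OF x] by blast
next
  show "\<exists>C. \<forall>x. l2 x \<longrightarrow> l2norm (\<lambda>n. c * x n) \<le> C * l2norm x"
    using l2_scale by (metis order_refl)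
qed (auto simp: algebra_simps)

lemma bop_comp_scalar: assumes T: "bounded_op T" shows "bounded_op (\<lambda>x n. c * T x n)"
proof -
  have "(\<lambda>x n. c * T x n) = op_scalar c \<circ> T" by (auto simp: op_scalar_def)
  moreover have "bounded_op (op_scalar c \<circ> T)"
  proof -
    obtain C where C: "\<And>x. l2 x \<Longrightarrow> l2norm (T x) \<le> C * l2norm x" using bop_bound[OF T] by blast
    show ?thesis unfolding bounded_op_def op_scalar_def comp_def
    proof (intro conjI allI impI)
      fix x assume x: "l2 x" show "l2 (\<lambda>n. c * T x n)" using l2_scale[OF bop_l2[OF T x]] by blast
    next
      fix x y assume x: "l2 x" and y: "l2 y"
      show "(\<lambda>n. c * T (\<lambda>n. x n + y n) n) = (\<lambda>n. c * T x n + c * T y n)"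
        by (simp add: bop_add[OF T x y] algebra_simps)
    next
      fix d x assume x: "l2 x"
      show "(\<lambda>n. c * T (\<lambda>n. d * x n) n) = (\<lambda>n. d * (c * T x n))"
        by (simp add: bop_scale[OF T x] algebra_simps)
    next
      show "\<exists>C. \<forall>x. l2 x \<longrightarrow> l2norm (\<lambda>n. c * T x n) \<le> C * l2norm x"
      proof (intro exI allI impI)
        fix x assume x: "l2 x"
        have "l2norm (\<lambda>n. c * T x n) = cmod c * l2norm (T x)" using l2_scale[OF bop_l2[OF T x]] by blast
        also have "\<dots> \<le> cmod c * (C * l2norm x)" using C[OF x] by (simp add: mult_left_mono)
        finally show "l2norm (\<lambda>n. c * T x n) \<le> (cmod c * C) * l2norm x" by (simp add: mult.assoc)
      qed
    qed
  qed
  ultimately show ?thesis by simp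
qed

lemma bop_neg: assumes "bounded_op T" shows "bounded_op (\<lambda>x n. - T x n)"
  using bop_comp_scalar[OF assms, of "-1"] by simp

lemma op_sub_as_add: "op_sub S T = op_add S (\<lambda>x n. - T x n)"
  by (auto simp: op_sub_def op_add_def)

lemma bop_subI: "bounded_op S \<Longrightarrow> bounded_op T \<Longrightarrow> bounded_op (op_sub S T)"
  unfolding op_sub_as_add by (intro bop_addI bop_neg)

lemma bop_Pn: assumes T: "bounded_op T" shows "bounded_op (\<lambda>x. Pn n (T x))"
proof -
  obtain C where C: "\<And>x. l2 x \<Longrightarrow> l2norm (T x) \<le> C * l2norm x" using bop_bound[OF T] by blast
  show ?thesis unfolding bounded_op_def
  proof (intro conjI allI impI)
    fix x assume x: "l2 x" show "l2 (Pn n (T x))" using Pn_l2[OF bop_l2[OF T x]] by blast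
  next
    fix x y assume x: "l2 x" and y: "l2 y"
    show "Pn n (T (\<lambda>n. x n + y n)) = (\<lambda>k. Pn n (T x) k + Pn n (T y) k)"
      by (auto simp: bop_add[OF T x y] Pn_def)
  next
    fix d x assume x: "l2 x"
    show "Pn n (T (\<lambda>n. d * x n)) = (\<lambda>k. d * Pn n (T x) k)"
      by (auto simp: bop_scale[OF T x] Pn_def)
  next
    show "\<exists>C. \<forall>x. l2 x \<longrightarrow> l2norm (Pn n (T x)) \<le> C * l2norm x"
      using Pn_l2 bop_l2[OF T] C by (meson order_trans)
  qed
qed




lemma compact_bop: "compact_op T \<Longrightarrow> bounded_op T" unfolding compact_op_def by blast

lemma compact_seq: assumes "compact_op T" "\<And>k. l2 (xs k) \<and> l2norm (xs k) \<le> 1"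
  obtains r :: "nat \<Rightarrow> nat" where "strict_mono r" "\<And>\<epsilon>. \<epsilon> > 0 \<Longrightarrow> \<exists>N::nat. \<forall>m\<ge>N. \<forall>n\<ge>N. l2norm (\<lambda>i. T (xs (r m)) i - T (xs (r n)) i) < \<epsilon>"
  using assms unfolding compact_op_def by blast

lemma compact_opI:
  assumes "bounded_op T"
    and "\<And>xs. (\<And>k. l2 (xs k) \<and> l2norm (xs k) \<le> 1) \<Longrightarrow> \<exists>r::nat\<Rightarrow>nat. strict_mono r \<and>
           (\<forall>\<epsilon>::real>0. \<exists>N::nat. \<forall>m\<ge>N. \<forall>n\<ge>N. l2norm (\<lambda>i. T (xs (r m)) i - T (xs (r n)) i) < \<epsilon>)"
  shows "compact_op T"
  using assms unfolding compact_op_def by blast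

lemma compact_add: assumes A: "compact_op A" and B: "compact_op B" shows "compact_op (op_add A B)"
proof (rule compact_opI)
  show "bounded_op (op_add A B)" using A B by (intro bop_addI compact_bop)
next
  fix xs :: "nat \<Rightarrow> nat \<Rightarrow> complex" assume xs: "\<And>k. l2 (xs k) \<and> l2norm (xs k) \<le> 1"
  obtain r1 :: "nat \<Rightarrow> nat" where r1: "strict_mono r1"
    and c1: "\<And>\<epsilon>. \<epsilon> > 0 \<Longrightarrow> \<exists>N::nat. \<forall>m\<ge>N. \<forall>n\<ge>N. l2norm (\<lambda>i. A (xs (r1 m)) i - A (xs (r1 n)) i) < \<epsilon>"
    by (rule compact_seq[of A xs, OF A xs]) blast
  have xs1: "\<And>k. l2 ((xs \<circ> r1) k) \<and> l2norm ((xs \<circ> r1) k) \<le> 1" using xs by simp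
  obtain r2 :: "nat \<Rightarrow> nat" where r2: "strict_mono r2"
    and c2: "\<And>\<epsilon>. \<epsilon> > 0 \<Longrightarrow> \<exists>N::nat. \<forall>m\<ge>N. \<forall>n\<ge>N. l2norm (\<lambda>i. B ((xs \<circ> r1) (r2 m)) i - B ((xs \<circ> r1) (r2 n)) i) < \<epsilon>"
    by (rule compact_seq[of B "xs \<circ> r1", OF B xs1]) blast
  show "\<exists>r::nat\<Rightarrow>nat. strict_mono r \<and> (\<forall>\<epsilon>::real>0. \<exists>N::nat. \<forall>m\<ge>N. \<forall>n\<ge>N. l2norm (\<lambda>i. op_add A B (xs (r m)) i - op_add A B (xs (r n)) i) < \<epsilon>)"
  proof (intro exI[of _ "r1 \<circ> r2"] conjI allI impI)
    show "strict_mono (r1 \<circ> r2)" using r1 r2 by (rule strict_mono_o)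
    fix \<epsilon> :: real assume e: "\<epsilon> > 0"
    obtain N1 where N1: "\<And>m n. m \<ge> N1 \<Longrightarrow> n \<ge> N1 \<Longrightarrow> l2norm (\<lambda>i. A (xs (r1 m)) i - A (xs (r1 n)) i) < \<epsilon>/2"
      using c1[of "\<epsilon>/2"] e by auto
    obtain N2 where N2: "\<And>m n. m \<ge> N2 \<Longrightarrow> n \<ge> N2 \<Longrightarrow> l2norm (\<lambda>i. B ((xs \<circ> r1) (r2 m)) i - B ((xs \<circ> r1) (r2 n)) i) < \<epsilon>/2"
      using c2[of "\<epsilon>/2"] e by auto
    show "\<exists>N::nat. \<forall>m\<ge>N. \<forall>n\<ge>N. l2norm (\<lambda>i. op_add A B (xs ((r1 \<circ> r2) m)) i - op_add A B (xs ((r1 \<circ> r2) n)) i) < \<epsilon>"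
    proof (intro exI[of _ "max N1 N2"] allI impI)
      fix m n assume m: "max N1 N2 \<le> m" and n: "max N1 N2 \<le> n"
      define u where "u = xs (r1 (r2 m))"
      define v where "v = xs (r1 (r2 n))"
      have u: "l2 u" and v: "l2 v" using xs by (auto simp: u_def v_def)
      have la: "l2 (\<lambda>i. A u i - A v i)" using l2_diff[OF bop_l2[OF compact_bop[OF A] u] bop_l2[OF compact_bop[OF A] v]] by blast
      have lb: "l2 (\<lambda>i. B u i - B v i)" using l2_diff[OF bop_l2[OF compact_bop[OF B] u] bop_l2[OF compact_bop[OF B] v]] by blast
      have "r2 m \<ge> N1" using m seq_suble[OF r2, of m] by linarith
      have "r2 n \<ge> N1" using n seq_suble[OF r2, of n] by linarith
      hence a: "l2norm (\<lambda>i. A u i - A v i) < \<epsilon>/2" using N1 \<open>r2 m \<ge> N1\<close> unfolding u_def v_def by blast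
      have "m \<ge> N2" "n \<ge> N2" using m n by auto
      hence b: "l2norm (\<lambda>i. B u i - B v i) < \<epsilon>/2" using N2[of m n] unfolding u_def v_def by simp
      have eq: "(\<lambda>i. op_add A B u i - op_add A B v i) = (\<lambda>i. (A u i - A v i) + (B u i - B v i))"
        by (auto simp: op_add_def)
      have "l2norm (\<lambda>i. op_add A B u i - op_add A B v i) \<le> l2norm (\<lambda>i. A u i - A v i) + l2norm (\<lambda>i. B u i - B v i)"
        unfolding eq using l2_add[OF la lb] by blast
      thus "l2norm (\<lambda>i. op_add A B (xs ((r1 \<circ> r2) m)) i - op_add A B (xs ((r1 \<circ> r2) n)) i) < \<epsilon>"
        using a b by (simp add: u_def v_def)
    qed
  qed
qed

lemma compact_neg: assumes A: "compact_op A" shows "compact_op (\<lambda>x n. - A x n)"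
proof (rule compact_opI)
  show "bounded_op (\<lambda>x n. - A x n)" using A by (intro bop_neg compact_bop)
next
  fix xs :: "nat \<Rightarrow> nat \<Rightarrow> complex" assume xs: "\<And>k. l2 (xs k) \<and> l2norm (xs k) \<le> 1"
  obtain r :: "nat \<Rightarrow> nat" where r: "strict_mono r"
    and c: "\<And>\<epsilon>. \<epsilon> > 0 \<Longrightarrow> \<exists>N::nat. \<forall>m\<ge>N. \<forall>n\<ge>N. l2norm (\<lambda>i. A (xs (r m)) i - A (xs (r n)) i) < \<epsilon>"
    by (rule compact_seq[of A xs, OF A xs]) blast
  have "l2norm (\<lambda>i. - A (xs (r m)) i - - A (xs (r n)) i) = l2norm (\<lambda>i. A (xs (r m)) i - A (xs (r n)) i)" for m n
  proof -
    have l: "l2 (\<lambda>i. A (xs (r m)) i - A (xs (r n)) i)"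
      using l2_diff bop_l2[OF compact_bop[OF A]] xs by blast
    have "(\<lambda>i. - A (xs (r m)) i - - A (xs (r n)) i) = (\<lambda>i. - (A (xs (r m)) i - A (xs (r n)) i))" by auto
    thus ?thesis using l2_neg[OF l] by simp
  qed
  thus "\<exists>r::nat\<Rightarrow>nat. strict_mono r \<and> (\<forall>\<epsilon>::real>0. \<exists>N::nat. \<forall>m\<ge>N. \<forall>n\<ge>N. l2norm (\<lambda>i. - A (xs (r m)) i - - A (xs (r n)) i) < \<epsilon>)"
    using r c by auto
qed

lemma compact_sub: "compact_op A \<Longrightarrow> compact_op B \<Longrightarrow> compact_op (op_sub A B)"
  unfolding op_sub_as_add by (intro compact_add compact_neg)

lemma single_l2: "l2 (\<lambda>j. if j = k then z else 0) \<and> l2norm (\<lambda>j. if j = k then z else 0) = cmod z"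
proof -
  have e: "(\<lambda>j. if j = k then z else 0) = (\<lambda>j. z * basis_vec k j)" by (auto simp: basis_vec_def)
  show ?thesis unfolding e using l2_scale[OF basis_vec_l2[THEN conjunct1]] basis_vec_l2 by simp
qed

lemma compact_coord: assumes T: "bounded_op T" shows "compact_op (\<lambda>x j. if j = k then T x k else 0)"
proof (rule compact_opI)
  obtain C where C: "\<And>x. l2 x \<Longrightarrow> l2norm (T x) \<le> C * l2norm x" using bop_bound[OF T] by blast
  show "bounded_op (\<lambda>x j. if j = k then T x k else 0)" unfolding bounded_op_def
  proof (intro conjI allI impI)
    fix x assume x: "l2 x" show "l2 (\<lambda>j. if j = k then T x k else 0)" using single_l2 by blast
  next
    fix x y assume x: "l2 x" and y: "l2 y"
    show "(\<lambda>j. if j = k then T (\<lambda>n. x n + y n) k else 0) = (\<lambda>n. (if n = k then T x k else 0) + (if n = k then T y k else 0))"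
      by (auto simp: bop_add[OF T x y])
  next
    fix d x assume x: "l2 x"
    show "(\<lambda>j. if j = k then T (\<lambda>n. d * x n) k else 0) = (\<lambda>n. d * (if n = k then T x k else 0))"
      by (auto simp: bop_scale[OF T x])
  next
    show "\<exists>C. \<forall>x. l2 x \<longrightarrow> l2norm (\<lambda>j. if j = k then T x k else 0) \<le> C * l2norm x"
    proof (intro exI[of _ C] allI impI)
      fix x assume x: "l2 x"
      have "l2norm (\<lambda>j. if j = k then T x k else 0) = cmod (T x k)" using single_l2 by blast
      also have "\<dots> \<le> l2norm (T x)" by (rule l2_coord[OF bop_l2[OF T x]])
      finally show "l2norm (\<lambda>j. if j = k then T x k else 0) \<le> C * l2norm x" using C[OF x] by linarith
    qed
  qed
next
  obtain C where C: "\<And>x. l2 x \<Longrightarrow> l2norm (T x) \<le> C * l2norm x" using bop_bound[OF T] by blast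
  fix xs :: "nat \<Rightarrow> nat \<Rightarrow> complex" assume xs: "\<And>k. l2 (xs k) \<and> l2norm (xs k) \<le> 1"
  define a where "a m = T (xs m) k" for m
  have "cmod (a m) \<le> max C 0" for m
  proof -
    have "cmod (a m) \<le> l2norm (T (xs m))" unfolding a_def using l2_coord bop_l2[OF T] xs by blast
    also have "\<dots> \<le> C * l2norm (xs m)" using C xs by blast
    also have "\<dots> \<le> max C 0 * 1"
      by (rule order_trans[of _ "max C 0 * l2norm (xs m)"]) (auto intro!: mult_right_mono mult_left_le simp: l2norm_nonneg xs)
    finally show ?thesis by simp
  qed
  hence "bounded (range a)" unfolding bounded_iff by auto
  then obtain l r where r: "strict_mono r" and lim: "(a \<circ> r) \<longlonglongrightarrow> l"
    using bounded_imp_convergent_subsequence by blast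
  have cau: "Cauchy (a \<circ> r)" using lim by (rule LIMSEQ_imp_Cauchy)
  show "\<exists>r::nat\<Rightarrow>nat. strict_mono r \<and> (\<forall>\<epsilon>::real>0. \<exists>N::nat. \<forall>m\<ge>N. \<forall>n\<ge>N. l2norm (\<lambda>i. (if i = k then T (xs (r m)) k else 0) - (if i = k then T (xs (r n)) k else 0)) < \<epsilon>)"
  proof (rule exI[of _ r], intro conjI allI impI)
    fix \<epsilon> :: real assume e: "\<epsilon> > 0"
    obtain N where N: "\<And>m n. m \<ge> N \<Longrightarrow> n \<ge> N \<Longrightarrow> dist ((a \<circ> r) m) ((a \<circ> r) n) < \<epsilon>"
      using cau e unfolding Cauchy_def by blast
    have eq: "(\<lambda>i. (if i = k then T (xs (r m)) k else 0) - (if i = k then T (xs (r n)) k else 0)) = (\<lambda>i. if i = k then a (r m) - a (r n) else 0)" for m n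
      by (auto simp: a_def)
    show "\<exists>N::nat. \<forall>m\<ge>N. \<forall>n\<ge>N. l2norm (\<lambda>i. (if i = k then T (xs (r m)) k else 0) - (if i = k then T (xs (r n)) k else 0)) < \<epsilon>"
      using N unfolding eq single_l2[THEN conjunct2] by (auto simp: dist_norm)
  qed (rule r)
qed

lemma compact_Pn: assumes T: "bounded_op T" shows "compact_op (\<lambda>x. Pn n (T x))"
proof (induction n)
  case 0
  show ?case
  proof (rule compact_opI)
    show "bounded_op (\<lambda>x. Pn 0 (T x))" by (rule bop_Pn[OF T])
    fix xs :: "nat \<Rightarrow> nat \<Rightarrow> complex"
    show "\<exists>r::nat\<Rightarrow>nat. strict_mono r \<and> (\<forall>\<epsilon>::real>0. \<exists>N::nat. \<forall>m\<ge>N. \<forall>n\<ge>N. l2norm (\<lambda>i. Pn 0 (T (xs (r m))) i - Pn 0 (T (xs (r n))) i) < \<epsilon>)"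
      apply (rule exI[of _ id])
      apply (rule conjI)
      apply (simp add: strict_mono_def)
      apply (simp add: Pn_def l2_zero)
      done
  qed
next
  case (Suc n)
  have "(\<lambda>x. Pn (Suc n) (T x)) = op_add (\<lambda>x. Pn n (T x)) (\<lambda>x j. if j = n then T x n else 0)"
    by (intro ext) (auto simp: Pn_def op_add_def)
  thus ?case using Suc compact_coord[OF T] by (simp add: compact_add)
qed




lemma antihermD: "antiherm_op T \<Longrightarrow> l2 x \<Longrightarrow> l2 y \<Longrightarrow> l2inner (T x) y = - l2inner x (T y)"
  unfolding antiherm_op_def by blast

lemma antiherm_add: assumes S: "bounded_op S" "antiherm_op S" and T: "bounded_op T" "antiherm_op T"
  shows "antiherm_op (op_add S T)"
  unfolding antiherm_op_def
proof (intro allI impI)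
  fix x y assume x: "l2 x" and y: "l2 y"
  have "l2inner (op_add S T x) y = l2inner (S x) y + l2inner (T x) y"
    unfolding op_add_def by (rule l2inner_add_left[OF bop_l2[OF S(1) x] bop_l2[OF T(1) x] y])
  also have "\<dots> = - l2inner x (S y) - l2inner x (T y)" using antihermD[OF S(2) x y] antihermD[OF T(2) x y] by simp
  also have "\<dots> = - l2inner x (op_add S T y)"
    unfolding op_add_def using l2inner_add_right[OF x bop_l2[OF S(1) y] bop_l2[OF T(1) y]] by simp
  finally show "l2inner (op_add S T x) y = - l2inner x (op_add S T y)" .
qed

lemma antiherm_neg: assumes S: "bounded_op S" "antiherm_op S" shows "antiherm_op (\<lambda>x n. - S x n)"
  unfolding antiherm_op_def
proof (intro allI impI)
  fix x y assume x: "l2 x" and y: "l2 y"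
  have "l2inner (\<lambda>n. - S x n) y = - l2inner (S x) y"
    using l2inner_scale_left[OF bop_l2[OF S(1) x] y, of "-1"] by simp
  also have "\<dots> = l2inner x (S y)" using antihermD[OF S(2) x y] by simp
  also have "\<dots> = - l2inner x (\<lambda>n. - S y n)"
    using l2inner_scale_right[OF x bop_l2[OF S(1) y], of "-1"] by simp
  finally show "l2inner (\<lambda>n. - S x n) y = - l2inner x (\<lambda>n. - S y n)" .
qed

lemma antiherm_sub: assumes "bounded_op S" "antiherm_op S" "bounded_op T" "antiherm_op T"
  shows "antiherm_op (op_sub S T)"
  unfolding op_sub_as_add using assms by (intro antiherm_add bop_neg antiherm_neg)

lemma antiherm_scalar: "antiherm_op (op_scalar (\<i> * complex_of_real t))"
  unfolding antiherm_op_def op_scalar_def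
proof (intro allI impI)
  fix x y assume x: "l2 x" and y: "l2 y"
  show "l2inner (\<lambda>n. \<i> * complex_of_real t * x n) y = - l2inner x (\<lambda>n. \<i> * complex_of_real t * y n)"
    using l2inner_scale_left[OF x y] l2inner_scale_right[OF x y] by simp
qed

lemma zero_op_props: "bounded_op (\<lambda>x n. 0) \<and> antiherm_op (\<lambda>x n. 0) \<and> diag_op (\<lambda>x n. 0) \<and> compact_op (\<lambda>x n. 0)"
proof -
  have z: "(\<lambda>x n. 0::complex) = op_scalar 0" by (auto simp: op_scalar_def)
  have b: "bounded_op (\<lambda>x n. 0)" unfolding z by (rule bop_scalar)
  have a: "antiherm_op (\<lambda>x n. 0)" unfolding z using antiherm_scalar[of 0] by simp
  have d: "diag_op (\<lambda>x n. 0)" unfolding diag_op_def using b by (auto intro!: exI[of _ 0])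
  have "compact_op (\<lambda>x n. 0)"
  proof (rule compact_opI[OF b])
    fix xs :: "nat \<Rightarrow> nat \<Rightarrow> complex"
    show "\<exists>r::nat\<Rightarrow>nat. strict_mono r \<and> (\<forall>\<epsilon>::real>0. \<exists>N::nat. \<forall>m\<ge>N. \<forall>n\<ge>N. l2norm (\<lambda>i. (0::complex) - 0) < \<epsilon>)"
      apply (rule exI[of _ id])
      apply (rule conjI)
      apply (simp add: strict_mono_def)
      apply (simp add: l2_zero)
      done
  qed
  thus ?thesis using a b d by blast
qed

lemma diag_basis: assumes "diag_op D"
  shows "D (basis_vec i) = (\<lambda>n. D (basis_vec i) i * basis_vec i n)"
proof -
  obtain c where c: "D (basis_vec i) = (\<lambda>n. c * basis_vec i n)" using assms unfolding diag_op_def by blast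
  hence "D (basis_vec i) i = c" by (simp add: basis_vec_def)
  thus ?thesis using c by (simp add: basis_vec_def)
qed

lemma diag_opI: assumes "bounded_op D" "\<And>i. D (basis_vec i) = (\<lambda>n. c i * basis_vec i n)"
  shows "diag_op D" unfolding diag_op_def using assms by blast

lemma diag_add: assumes "diag_op S" "diag_op T" shows "diag_op (op_add S T)"
proof (rule diag_opI)
  show "bounded_op (op_add S T)" using assms unfolding diag_op_def by (blast intro: bop_addI)
  fix i show "op_add S T (basis_vec i) = (\<lambda>n. (S (basis_vec i) i + T (basis_vec i) i) * basis_vec i n)"
    unfolding op_add_def by (subst diag_basis[OF assms(1)], subst diag_basis[OF assms(2)]) (simp add: algebra_simps)
qed

lemma diag_neg: assumes "diag_op S" shows "diag_op (\<lambda>x n. - S x n)"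
proof (rule diag_opI)
  show "bounded_op (\<lambda>x n. - S x n)" using assms unfolding diag_op_def by (blast intro: bop_neg)
  fix i show "(\<lambda>n. - S (basis_vec i) n) = (\<lambda>n. (- S (basis_vec i) i) * basis_vec i n)"
    by (subst diag_basis[OF assms(1)]) simp
qed

lemma diag_sub: "diag_op S \<Longrightarrow> diag_op T \<Longrightarrow> diag_op (op_sub S T)"
  unfolding op_sub_as_add by (intro diag_add diag_neg)

lemma diag_scalar: "diag_op (op_scalar c)"
  by (rule diag_opI[OF bop_scalar, of _ "\<lambda>i. c"]) (simp add: op_scalar_def)

lemma diag_antiherm_pointwise: assumes d: "diag_op D" and a: "antiherm_op D" and v: "l2 v"
  shows "D v k = D (basis_vec k) k * v k"
proof -
  let ?\<delta> = "D (basis_vec k) k"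
  have e: "l2 (basis_vec k)" using basis_vec_l2 by blast
  have "?\<delta> = l2inner (D (basis_vec k)) (basis_vec k)" by (simp add: l2inner_basis)
  also have "\<dots> = - l2inner (basis_vec k) (D (basis_vec k))" by (rule antihermD[OF a e e])
  also have "\<dots> = - cnj ?\<delta>" by (simp add: l2inner_basis_left)
  finally have dd: "?\<delta> = - cnj ?\<delta>" .
  have "D v k = l2inner (D v) (basis_vec k)" by (simp add: l2inner_basis)
  also have "\<dots> = - l2inner v (D (basis_vec k))" by (rule antihermD[OF a v e])
  also have "\<dots> = - l2inner v (\<lambda>n. ?\<delta> * basis_vec k n)" by (subst diag_basis[OF d], rule refl)
  also have "\<dots> = - (cnj ?\<delta> * v k)" using l2inner_scale_right[OF v e] by (simp add: l2inner_basis)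
  also have "\<dots> = ?\<delta> * v k" using dd by (metis minus_mult_left minus_minus)
  finally show ?thesis .
qed

lemma selfadj_pointwise: assumes d: "diag_op b" and a: "selfadj_op b" and v: "l2 v"
  shows "b v k = b (basis_vec k) k * v k"
proof -
  let ?\<delta> = "b (basis_vec k) k"
  have e: "l2 (basis_vec k)" using basis_vec_l2 by blast
  have "?\<delta> = l2inner (b (basis_vec k)) (basis_vec k)" by (simp add: l2inner_basis)
  also have "\<dots> = l2inner (basis_vec k) (b (basis_vec k))" using a e unfolding selfadj_op_def by blast
  also have "\<dots> = cnj ?\<delta>" by (simp add: l2inner_basis_left)
  finally have dd: "?\<delta> = cnj ?\<delta>" .
  have "b v k = l2inner (b v) (basis_vec k)" by (simp add: l2inner_basis)
  also have "\<dots> = l2inner v (b (basis_vec k))" using a e v unfolding selfadj_op_def by blast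
  also have "\<dots> = l2inner v (\<lambda>n. ?\<delta> * basis_vec k n)" by (subst diag_basis[OF d], rule refl)
  also have "\<dots> = cnj ?\<delta> * v k" using l2inner_scale_right[OF v e] by (simp add: l2inner_basis)
  also have "\<dots> = ?\<delta> * v k" using dd by simp
  finally show ?thesis .
qed




lemma Qn_zero: "Qn n (\<lambda>k. 0) = (\<lambda>k. 0)" by (auto simp: Qn_def)

lemma tail_uniform: assumes K: "compact_op K" and e: "\<epsilon> > 0"
  shows "\<exists>n. \<forall>u. l2 u \<longrightarrow> l2norm (Qn n (K u)) \<le> \<epsilon> * l2norm u"
proof (rule ccontr)
  have Kb: "bounded_op K" using K by (rule compact_bop)
  assume "\<not> ?thesis"
  hence "\<forall>n. \<exists>u. l2 u \<and> l2norm (Qn n (K u)) > \<epsilon> * l2norm u" by (auto simp: not_le)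
  then obtain u where u: "\<And>n. l2 (u n) \<and> l2norm (Qn n (K (u n))) > \<epsilon> * l2norm (u n)" by metis
  have pos: "l2norm (u n) > 0" for n
  proof -
    have "l2norm (u n) \<noteq> 0"
    proof
      assume "l2norm (u n) = 0"
      hence "u n = (\<lambda>k. 0)" using l2norm_eq0 u by blast
      hence "Qn n (K (u n)) = (\<lambda>k. 0)" by (simp add: bop_zero[OF Kb] Qn_zero)
      thus False using u[of n] \<open>l2norm (u n) = 0\<close> l2_zero by simp
    qed
    moreover have "l2norm (u n) \<ge> 0" using l2norm_nonneg u by blast
    ultimately show ?thesis by linarith
  qed
  define c where "c n = complex_of_real (1 / l2norm (u n))" for n
  define x where "x n = (\<lambda>k. c n * u n k)" for n
  have cn: "cmod (c n) = 1 / l2norm (u n)" for n using pos[of n] unfolding c_def by (simp only: norm_of_real) simp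
  have xl: "l2 (x n) \<and> l2norm (x n) \<le> 1" for n
  proof -
    have "l2 (x n) \<and> l2norm (x n) = cmod (c n) * l2norm (u n)" unfolding x_def using l2_scale u by blast
    moreover have "cmod (c n) * l2norm (u n) = 1" using pos[of n] by (simp add: cn)
    ultimately show ?thesis by simp
  qed
  have big: "l2norm (Qn n (K (x n))) > \<epsilon>" for n
  proof -
    have "K (x n) = (\<lambda>k. c n * K (u n) k)" unfolding x_def by (rule bop_scale[OF Kb]) (use u in blast)
    hence "Qn n (K (x n)) = (\<lambda>k. c n * Qn n (K (u n)) k)" by (auto simp: Qn_def)
    moreover have "l2 (Qn n (K (u n)))" using Qn_l2 bop_l2[OF Kb] u by blast
    ultimately have "l2norm (Qn n (K (x n))) = cmod (c n) * l2norm (Qn n (K (u n)))" using l2_scale by simp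
    also have "\<dots> = l2norm (Qn n (K (u n))) / l2norm (u n)" using pos[of n] by (simp add: cn)
    finally show ?thesis using u[of n] pos[of n] by (simp add: pos_less_divide_eq mult.commute)
  qed
  obtain r :: "nat \<Rightarrow> nat" where r: "strict_mono r"
    and cau: "\<And>\<delta>. \<delta> > 0 \<Longrightarrow> \<exists>N::nat. \<forall>m\<ge>N. \<forall>n\<ge>N. l2norm (\<lambda>i. K (x (r m)) i - K (x (r n)) i) < \<delta>"
    by (rule compact_seq[of K x, OF K xl]) blast
  obtain N0 where N0: "\<And>m n. m \<ge> N0 \<Longrightarrow> n \<ge> N0 \<Longrightarrow> l2norm (\<lambda>i. K (x (r m)) i - K (x (r n)) i) < \<epsilon>/2"
    using cau[of "\<epsilon>/2"] e by auto
  define v where "v = K (x (r N0))"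
  have vl: "l2 v" unfolding v_def using bop_l2[OF Kb] xl by blast
  obtain n0 where n0: "\<And>n. n \<ge> n0 \<Longrightarrow> l2norm (Qn n v) < \<epsilon>/2" using tail_small[OF vl, of "\<epsilon>/2"] e by auto
  define m where "m = max N0 n0"
  define p where "p = r m"
  have "p \<ge> m" unfolding p_def by (rule seq_suble[OF r])
  hence pn0: "p \<ge> n0" unfolding m_def by simp
  define w where "w = K (x p)"
  have wl: "l2 w" unfolding w_def using bop_l2[OF Kb] xl by blast
  have dl: "l2 (\<lambda>i. w i - v i)" using l2_diff[OF wl vl] by blast
  have split: "Qn p w = (\<lambda>i. Qn p v i + Qn p (\<lambda>i. w i - v i) i)" by (auto simp: Qn_def)
  have "l2norm (Qn p w) \<le> l2norm (Qn p v) + l2norm (Qn p (\<lambda>i. w i - v i))"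
    unfolding split using l2_add Qn_l2[OF vl] Qn_l2[OF dl] by blast
  also have "l2norm (Qn p (\<lambda>i. w i - v i)) \<le> l2norm (\<lambda>i. w i - v i)" using Qn_l2[OF dl] by blast
  also have "l2norm (\<lambda>i. w i - v i) < \<epsilon>/2" unfolding w_def v_def p_def using N0[of m N0] by (simp add: m_def)
  also have "l2norm (Qn p v) < \<epsilon>/2" using n0[OF pn0] .
  finally have "l2norm (Qn p w) < \<epsilon>" by simp
  thus False using big[of p] unfolding w_def by simp
qed

lemma tail_right: assumes Kb: "bounded_op K" and Ka: "antiherm_op K" and e: "\<epsilon> \<ge> 0"
  and h: "\<And>u. l2 u \<Longrightarrow> l2norm (Qn n (K u)) \<le> \<epsilon> * l2norm u" and x: "l2 x"
  shows "l2norm (K (Qn n x)) \<le> \<epsilon> * l2norm x"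
proof -
  have qx: "l2 (Qn n x)" using Qn_l2[OF x] by blast
  define w where "w = K (Qn n x)"
  have wl: "l2 w" unfolding w_def using bop_l2[OF Kb qx] .
  have kw: "l2 (K w)" using bop_l2[OF Kb wl] .
  have "complex_of_real ((l2norm w)^2) = l2inner w w" using l2inner_self[OF wl] by simp
  also have "\<dots> = - l2inner (Qn n x) (K w)" unfolding w_def by (rule antihermD[OF Ka qx wl[unfolded w_def]])
  also have "\<dots> = - l2inner x (Qn n (K w))" by (simp add: l2inner_Qn)
  finally have "(l2norm w)^2 = cmod (l2inner x (Qn n (K w)))"
    by (metis norm_minus_cancel norm_of_real abs_power2 power2_abs)
  also have "\<dots> \<le> l2norm x * l2norm (Qn n (K w))" using l2_CS[OF x] Qn_l2[OF kw] by blast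
  also have "\<dots> \<le> l2norm x * (\<epsilon> * l2norm w)" using h[OF wl] l2norm_nonneg[OF x] by (simp add: mult_left_mono)
  finally have ineq: "(l2norm w)^2 \<le> (\<epsilon> * l2norm x) * l2norm w" by (simp add: ac_simps)
  show ?thesis
  proof (cases "l2norm w = 0")
    case True thus ?thesis using e l2norm_nonneg[OF x] unfolding w_def by simp
  next
    case False
    hence "l2norm w > 0" using l2norm_nonneg[OF wl] by simp
    thus ?thesis using ineq unfolding w_def[symmetric] by (simp add: power2_eq_square)
  qed
qed




lemma diag_bop: "diag_op D \<Longrightarrow> bounded_op D" unfolding diag_op_def by blast

lemma l2norm_add3: assumes "l2 a" "l2 b" "l2 c"
  shows "l2norm (\<lambda>k. (a k + b k) + c k) \<le> l2norm a + l2norm b + l2norm c"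
proof -
  have ab: "l2 (\<lambda>k. a k + b k) \<and> l2norm (\<lambda>k. a k + b k) \<le> l2norm a + l2norm b" using l2_add assms by blast
  have "l2norm (\<lambda>k. (a k + b k) + c k) \<le> l2norm (\<lambda>k. a k + b k) + l2norm c"
    using l2_add[OF ab[THEN conjunct1] assms(3)] by blast
  thus ?thesis using ab by linarith
qed

lemma approx_main:
  assumes K: "compact_op K" "antiherm_op K" and D: "diag_op D" "antiherm_op D" and e: "\<epsilon> > 0"
  shows "\<exists>d\<in>DKah. op_norm (op_add K d) \<le> op_norm (op_add K D) + \<epsilon>"
proof -
  have Kb: "bounded_op K" using K by (simp add: compact_bop)
  have Db: "bounded_op D" using D by (simp add: diag_bop)
  obtain n where hn: "\<And>u. l2 u \<Longrightarrow> l2norm (Qn n (K u)) \<le> \<epsilon>/2 * l2norm u"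
    using tail_uniform[OF K(1), of "\<epsilon>/2"] e by auto
  have hr: "\<And>x. l2 x \<Longrightarrow> l2norm (K (Qn n x)) \<le> \<epsilon>/2 * l2norm x"
    by (rule tail_right[OF Kb K(2) _ hn]) (use e in auto)
  define d where "d = (\<lambda>x. Pn n (D x))"
  have DP: "D (Pn n y) = Pn n (D y)" if y: "l2 y" for y
  proof -
    have py: "l2 (Pn n y)" using Pn_l2[OF y] by blast
    show ?thesis
    proof (rule ext)
      fix k
      have a: "D (Pn n y) k = D (basis_vec k) k * Pn n y k" by (rule diag_antiherm_pointwise[OF D py])
      have b: "D y k = D (basis_vec k) k * y k" by (rule diag_antiherm_pointwise[OF D y])
      show "D (Pn n y) k = Pn n (D y) k" unfolding a by (simp add: b Pn_def)
    qed
  qed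
  have db: "bounded_op d" unfolding d_def by (rule bop_Pn[OF Db])
  have dd: "diag_op d"
  proof (rule diag_opI[OF db, of "\<lambda>i. if i < n then D (basis_vec i) i else 0"])
    fix i show "d (basis_vec i) = (\<lambda>m. (if i < n then D (basis_vec i) i else 0) * basis_vec i m)"
      unfolding d_def by (subst diag_basis[OF D(1)]) (auto simp: Pn_def basis_vec_def)
  qed
  have dc: "compact_op d" unfolding d_def by (rule compact_Pn[OF Db])
  have da: "antiherm_op d" unfolding antiherm_op_def
  proof (intro allI impI)
    fix x y assume x: "l2 x" and y: "l2 y"
    have py: "l2 (Pn n y)" using Pn_l2[OF y] by blast
    have "l2inner (d x) y = l2inner (D x) (Pn n y)" unfolding d_def by (rule l2inner_Pn)
    also have "\<dots> = - l2inner x (D (Pn n y))" by (rule antihermD[OF D(2) x py])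
    also have "\<dots> = - l2inner x (d y)" unfolding d_def by (simp add: DP[OF y])
    finally show "l2inner (d x) y = - l2inner x (d y)" .
  qed
  have dK: "d \<in> DKah" unfolding DKah_def using dd dc da by blast
  define T where "T = op_add K D"
  have Tb: "bounded_op T" unfolding T_def by (rule bop_addI[OF Kb Db])
  have "op_norm (op_add K d) \<le> op_norm T + \<epsilon>"
  proof (rule op_norm_le)
    fix x assume x: "l2 x" and x1: "l2norm x \<le> 1"
    have px: "l2 (Pn n x)" and px1: "l2norm (Pn n x) \<le> l2norm x" using Pn_l2[OF x] by blast+
    have qx: "l2 (Qn n x)" using Qn_l2[OF x] by blast
    have Kx: "K x = (\<lambda>k. K (Pn n x) k + K (Qn n x) k)"
      by (subst PQ_split[of x n]) (rule bop_add[OF Kb px qx])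
    have eq: "op_add K d x = (\<lambda>k. (Pn n (T (Pn n x)) k + Pn n (K (Qn n x)) k) + Qn n (K x) k)"
    proof (rule ext)
      fix k
      show "op_add K d x k = (Pn n (T (Pn n x)) k + Pn n (K (Qn n x)) k) + Qn n (K x) k"
        unfolding op_add_def d_def T_def DP[OF x]
        by (subst (1 2) Kx) (simp add: Pn_def Qn_def)
    qed
    have l1: "l2 (Pn n (T (Pn n x)))" using Pn_l2 bop_l2[OF Tb px] by blast
    have l2': "l2 (Pn n (K (Qn n x)))" using Pn_l2 bop_l2[OF Kb qx] by blast
    have l3: "l2 (Qn n (K x))" using Qn_l2 bop_l2[OF Kb x] by blast
    have "l2norm (op_add K d x) \<le> l2norm (Pn n (T (Pn n x))) + l2norm (Pn n (K (Qn n x))) + l2norm (Qn n (K x))"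
      unfolding eq by (rule l2norm_add3[OF l1 l2' l3])
    also have "l2norm (Pn n (T (Pn n x))) \<le> op_norm T"
    proof -
      have "l2norm (Pn n (T (Pn n x))) \<le> l2norm (T (Pn n x))" using Pn_l2 bop_l2[OF Tb px] by blast
      also have "\<dots> \<le> op_norm T" by (rule op_norm_ge[OF Tb px]) (use px1 x1 in linarith)
      finally show ?thesis .
    qed
    also have "l2norm (Pn n (K (Qn n x))) \<le> \<epsilon>/2"
    proof -
      have "l2norm (Pn n (K (Qn n x))) \<le> l2norm (K (Qn n x))" using Pn_l2 bop_l2[OF Kb qx] by blast
      also have "\<dots> \<le> \<epsilon>/2 * l2norm x" by (rule hr[OF x])
      also have "\<dots> \<le> \<epsilon>/2 * 1" using x1 e by (intro mult_left_mono) auto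
      finally show ?thesis by simp
    qed
    also have "l2norm (Qn n (K x)) \<le> \<epsilon>/2"
    proof -
      have "l2norm (Qn n (K x)) \<le> \<epsilon>/2 * l2norm x" by (rule hn[OF x])
      also have "\<dots> \<le> \<epsilon>/2 * 1" using x1 e by (intro mult_left_mono) auto
      finally show ?thesis by simp
    qed
    finally show "l2norm (op_add K d x) \<le> op_norm T + \<epsilon>" by simp
  qed
  thus ?thesis using dK unfolding T_def by blast
qed




lemma zero_in: "(\<lambda>x n. 0) \<in> DKah" "(\<lambda>x n. 0) \<in> DBah"
  using zero_op_props unfolding DKah_def DBah_def by auto

lemma DKah_D: "d \<in> DKah \<Longrightarrow> diag_op d \<and> compact_op d \<and> antiherm_op d \<and> bounded_op d"
  unfolding DKah_def by (auto simp: diag_bop)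

lemma DBah_D: "D \<in> DBah \<Longrightarrow> diag_op D \<and> antiherm_op D \<and> bounded_op D"
  unfolding DBah_def by (auto simp: diag_bop)

lemma Kah_D: "K \<in> Kah \<Longrightarrow> compact_op K \<and> antiherm_op K \<and> bounded_op K"
  unfolding Kah_def by (auto simp: compact_bop)

lemma part1:
  assumes K: "K \<in> Kah"
  shows "Inf ((\<lambda>D. op_norm (op_add K D)) ` DBah)
        = Inf ((\<lambda>(d, \<theta>::real). op_norm
              (op_add (op_add (op_add K (op_scalar (\<i> * complex_of_real t))) d)
                      (op_scalar (\<i> * complex_of_real \<theta>)))) ` (DKah \<times> UNIV))
    \<and> Inf ((\<lambda>(d, \<theta>::real). op_norm
              (op_add (op_add (op_add K (op_scalar (\<i> * complex_of_real t))) d)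
                      (op_scalar (\<i> * complex_of_real \<theta>)))) ` (DKah \<times> UNIV))
        = Inf ((\<lambda>d. op_norm (op_add K d)) ` DKah)"
proof -
  define S1 where "S1 = (\<lambda>D. op_norm (op_add K D)) ` DBah"
  define S2 where "S2 = (\<lambda>(d, \<theta>::real). op_norm
              (op_add (op_add (op_add K (op_scalar (\<i> * complex_of_real t))) d)
                      (op_scalar (\<i> * complex_of_real \<theta>)))) ` (DKah \<times> UNIV)"
  define S3 where "S3 = (\<lambda>d. op_norm (op_add K d)) ` DKah"
  have Kp: "compact_op K" "antiherm_op K" "bounded_op K" using Kah_D[OF K] by auto
  have S1nn: "\<And>y. y \<in> S1 \<Longrightarrow> y \<ge> 0"
    unfolding S1_def using DBah_D Kp by (auto intro!: op_norm_nonneg bop_addI)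
  have S1b: "bdd_below S1" using S1nn unfolding bdd_below_def by blast
  have S1ne: "S1 \<noteq> {}" unfolding S1_def using zero_in by blast
  have S3ne: "S3 \<noteq> {}" unfolding S3_def using zero_in by blast
  have S32: "S3 \<subseteq> S2"
  proof
    fix y assume "y \<in> S3"
    then obtain d where d: "d \<in> DKah" and y: "y = op_norm (op_add K d)" unfolding S3_def by blast
    have "op_add (op_add (op_add K (op_scalar (\<i> * complex_of_real t))) d) (op_scalar (\<i> * complex_of_real (-t))) = op_add K d"
      by (intro ext) (simp add: op_add_def op_scalar_def algebra_simps)
    hence "y = (\<lambda>(d, \<theta>::real). op_norm
              (op_add (op_add (op_add K (op_scalar (\<i> * complex_of_real t))) d)
                      (op_scalar (\<i> * complex_of_real \<theta>)))) (d, -t)" using y by simp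
    thus "y \<in> S2" unfolding S2_def using d by blast
  qed
  have S21: "S2 \<subseteq> S1"
  proof
    fix y assume "y \<in> S2"
    then obtain d \<theta> where d: "d \<in> DKah" and y: "y = op_norm
              (op_add (op_add (op_add K (op_scalar (\<i> * complex_of_real t))) d)
                      (op_scalar (\<i> * complex_of_real \<theta>)))" unfolding S2_def by fastforce
    define D where "D = op_add (op_add (op_scalar (\<i> * complex_of_real t)) d) (op_scalar (\<i> * complex_of_real \<theta>))"
    have dp: "diag_op d" "antiherm_op d" "bounded_op d" using DKah_D[OF d] by auto
    have "diag_op D" unfolding D_def using dp by (intro diag_add diag_scalar)
    moreover have "antiherm_op D" unfolding D_def using dp
      by (intro antiherm_add antiherm_scalar bop_addI bop_scalar)
    ultimately have DB: "D \<in> DBah" unfolding DBah_def by blast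
    have "op_add (op_add (op_add K (op_scalar (\<i> * complex_of_real t))) d) (op_scalar (\<i> * complex_of_real \<theta>)) = op_add K D"
      unfolding D_def by (intro ext) (simp add: op_add_def op_scalar_def algebra_simps)
    hence "y = op_norm (op_add K D)" using y by simp
    thus "y \<in> S1" unfolding S1_def using DB by (rule image_eqI)
  qed
  have S2ne: "S2 \<noteq> {}" using S32 S3ne by blast
  have S2b: "bdd_below S2" by (rule bdd_below_mono[OF S1b S21])
  have S3b: "bdd_below S3" by (rule bdd_below_mono[OF S2b S32])
  have i12: "Inf S1 \<le> Inf S2" by (rule cInf_superset_mono[OF S2ne S1b S21])
  have i23: "Inf S2 \<le> Inf S3" by (rule cInf_superset_mono[OF S3ne S2b S32])
  have i31: "Inf S3 \<le> Inf S1"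
  proof (rule cInf_greatest[OF S1ne])
    fix y assume "y \<in> S1"
    then obtain D where D: "D \<in> DBah" and y: "y = op_norm (op_add K D)" unfolding S1_def by blast
    have Dp: "diag_op D" "antiherm_op D" using DBah_D[OF D] by auto
    show "Inf S3 \<le> y"
    proof (rule field_le_epsilon)
      fix e :: real assume e: "e > 0"
      obtain d where d: "d \<in> DKah" and dn: "op_norm (op_add K d) \<le> op_norm (op_add K D) + e"
        using approx_main[OF Kp(1,2) Dp e] by blast
      have "Inf S3 \<le> op_norm (op_add K d)" by (rule cInf_lower[OF _ S3b]) (use d in \<open>simp add: S3_def\<close>)
      thus "Inf S3 \<le> y + e" using dn y by simp
    qed
  qed
  show ?thesis using i12 i23 i31 unfolding S1_def[symmetric] S2_def[symmetric] S3_def[symmetric] by linarith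
qed




lemma re_zero:
  assumes Xb: "bounded_op X" and Xa: "antiherm_op X" and K: "compact_op K'"
    and eq: "op_eq X (op_add K' (op_scalar c))"
  shows "Re c = 0"
proof (rule ccontr)
  assume nz: "Re c \<noteq> 0"
  define a where "a = \<bar>Re c\<bar>"
  have a: "a > 0" using nz by (simp add: a_def)
  have Kb: "bounded_op K'" using K by (rule compact_bop)
  have el: "\<And>n. l2 (basis_vec n)" using basis_vec_l2 by blast
  have lower: "cmod (K' (basis_vec n) n) \<ge> a" for n
  proof -
    have "X (basis_vec n) n = l2inner (X (basis_vec n)) (basis_vec n)" by (simp add: l2inner_basis)
    also have "\<dots> = - l2inner (basis_vec n) (X (basis_vec n))" by (rule antihermD[OF Xa el el])
    also have "\<dots> = - cnj (X (basis_vec n) n)" by (simp add: l2inner_basis_left)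
    finally have E: "X (basis_vec n) n = - cnj (X (basis_vec n) n)" .
    have "Re (X (basis_vec n) n) = Re (- cnj (X (basis_vec n) n))" using E by (rule arg_cong)
    hence "Re (X (basis_vec n) n) = 0" by simp
    moreover have "X (basis_vec n) = op_add K' (op_scalar c) (basis_vec n)" using eq el unfolding op_eq_def by blast
    hence "X (basis_vec n) n = K' (basis_vec n) n + c" by (simp add: op_add_def op_scalar_def basis_vec_def)
    ultimately have "Re (K' (basis_vec n) n) = - Re c" by simp
    thus ?thesis unfolding a_def using abs_Re_le_cmod by (metis abs_minus_cancel)
  qed
  have xl: "\<And>k. l2 (basis_vec k) \<and> l2norm (basis_vec k) \<le> 1" using basis_vec_l2 by simp
  obtain r :: "nat \<Rightarrow> nat" where r: "strict_mono r"
    and cau: "\<And>\<delta>. \<delta> > 0 \<Longrightarrow> \<exists>N::nat. \<forall>m\<ge>N. \<forall>n\<ge>N. l2norm (\<lambda>i. K' (basis_vec (r m)) i - K' (basis_vec (r n)) i) < \<delta>"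
    by (rule compact_seq[of K' basis_vec, OF K xl]) blast
  obtain N0 where N0: "\<And>m n. m \<ge> N0 \<Longrightarrow> n \<ge> N0 \<Longrightarrow> l2norm (\<lambda>i. K' (basis_vec (r m)) i - K' (basis_vec (r n)) i) < a/2"
    using cau[of "a/2"] a by auto
  define v where "v = K' (basis_vec (r N0))"
  have vl: "l2 v" unfolding v_def using bop_l2[OF Kb el] .
  obtain n0 where n0: "\<And>n. n \<ge> n0 \<Longrightarrow> l2norm (Qn n v) < a/2" using tail_small[OF vl, of "a/2"] a by auto
  define m where "m = max N0 n0"
  define p where "p = r m"
  have "p \<ge> m" unfolding p_def by (rule seq_suble[OF r])
  hence pn0: "p \<ge> n0" unfolding m_def by simp
  have "cmod (v p) = cmod (Qn p v p)" by (simp add: Qn_def)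
  also have "\<dots> \<le> l2norm (Qn p v)" using l2_coord Qn_l2[OF vl] by blast
  also have "\<dots> < a/2" by (rule n0[OF pn0])
  finally have vp: "cmod (v p) < a/2" .
  define w where "w = K' (basis_vec p)"
  have wl: "l2 w" unfolding w_def using bop_l2[OF Kb el] .
  have "cmod (w p - v p) \<le> l2norm (\<lambda>i. w i - v i)" using l2_coord l2_diff[OF wl vl] by blast
  also have "\<dots> < a/2" unfolding w_def v_def p_def using N0[of m N0] by (simp add: m_def)
  finally have "cmod (w p - v p) < a/2" .
  hence "cmod (w p) < a" using vp norm_triangle_ineq2[of "w p" "v p"] by linarith
  thus False using lower[of p] unfolding w_def by simp
qed

lemma antiherm_from_scalar:
  assumes Xb: "bounded_op X" and Xa: "antiherm_op X" and Kb: "bounded_op K'"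
    and eq: "op_eq X (op_add K' (op_scalar c))" and re: "Re c = 0"
  shows "antiherm_op K'"
  unfolding antiherm_op_def
proof (intro allI impI)
  fix x y assume x: "l2 x" and y: "l2 y"
  have Kx: "K' x = (\<lambda>n. X x n - c * x n)" using eq x unfolding op_eq_def op_add_def op_scalar_def by force
  have Ky: "K' y = (\<lambda>n. X y n - c * y n)" using eq y unfolding op_eq_def op_add_def op_scalar_def by force
  have cx: "l2 (\<lambda>n. c * x n)" and cy: "l2 (\<lambda>n. c * y n)" using l2_scale x y by blast+
  have cc: "cnj c = - c" using re by (simp add: complex_eq_iff)
  have "l2inner (K' x) y = l2inner (X x) y - c * l2inner x y"
    unfolding Kx by (simp add: l2inner_diff_left[OF bop_l2[OF Xb x] cx y] l2inner_scale_left[OF x y])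
  also have "\<dots> = - l2inner x (X y) - c * l2inner x y" using antihermD[OF Xa x y] by simp
  also have "\<dots> = - l2inner x (K' y)"
    unfolding Ky by (simp add: l2inner_diff_right[OF x bop_l2[OF Xb y] cy] l2inner_scale_right[OF x y] cc)
  finally show "l2inner (K' x) y = - l2inner x (K' y)" .
qed

lemma KCah_decomp:
  assumes X: "X \<in> KCah" and K: "compact_op K'" and eq: "op_eq X (op_add K' (op_scalar c))"
  shows "Re c = 0 \<and> K' \<in> Kah"
proof -
  have Xp: "bounded_op X" "antiherm_op X" using X unfolding KCah_def by auto
  have re: "Re c = 0" by (rule re_zero[OF Xp K eq])
  have "antiherm_op K'" by (rule antiherm_from_scalar[OF Xp compact_bop[OF K] eq re])
  thus ?thesis using re K unfolding Kah_def by blast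
qed




lemma op_eqD: "op_eq S T \<Longrightarrow> l2 x \<Longrightarrow> S x = T x" unfolding op_eq_def by blast
lemma op_eqI: "(\<And>x. l2 x \<Longrightarrow> S x = T x) \<Longrightarrow> op_eq S T" unfolding op_eq_def by blast

lemma KC_sub: assumes "KC_op X" "KC_op Y" shows "KC_op (op_sub X Y)"
proof -
  obtain K1 c1 where 1: "compact_op K1" "op_eq X (op_add K1 (op_scalar c1))" using assms(1) unfolding KC_op_def by blast
  obtain K2 c2 where 2: "compact_op K2" "op_eq Y (op_add K2 (op_scalar c2))" using assms(2) unfolding KC_op_def by blast
  have "op_eq (op_sub X Y) (op_add (op_sub K1 K2) (op_scalar (c1 - c2)))"
  proof (rule op_eqI)
    fix x assume x: "l2 x"
    show "op_sub X Y x = op_add (op_sub K1 K2) (op_scalar (c1 - c2)) x"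
      using op_eqD[OF 1(2) x] op_eqD[OF 2(2) x]
      by (simp add: op_sub_def op_add_def op_scalar_def algebra_simps)
  qed
  thus ?thesis unfolding KC_op_def using compact_sub[OF 1(1) 2(1)] by blast
qed

lemma comm_diag:
  assumes bd: "diag_op b" and bs: "selfadj_op b" and Dd: "diag_op D" and Da: "antiherm_op D" and x: "l2 x"
  shows "D (b x) = b (D x)"
proof (rule ext)
  fix k
  have bb: "bounded_op b" using bd by (rule diag_bop)
  have Db: "bounded_op D" using Dd by (rule diag_bop)
  have bx: "l2 (b x)" using bop_l2[OF bb x] .
  have Dx: "l2 (D x)" using bop_l2[OF Db x] .
  show "D (b x) k = b (D x) k"
    by (simp add: diag_antiherm_pointwise[OF Dd Da bx] selfadj_pointwise[OF bd bs Dx]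
                  diag_antiherm_pointwise[OF Dd Da x] selfadj_pointwise[OF bd bs x])
qed

lemma finsler_set:
  assumes bc: "compact_op b" and bs: "selfadj_op b" and bd: "diag_op b"
    and dist: "\<forall>i j. i \<noteq> j \<longrightarrow> b (basis_vec i) i \<noteq> b (basis_vec j) j"
    and X: "X \<in> KCah"
  shows "{op_norm Y | Y. Y \<in> KCah \<and> op_eq (op_comm Y b) (op_comm X b)} = (\<lambda>D. op_norm (op_sub X D)) ` DKCah"
proof -
  have bb: "bounded_op b" using bd by (rule diag_bop)
  have Xp: "bounded_op X" "KC_op X" "antiherm_op X" using X unfolding KCah_def by auto
  have el: "\<And>n. l2 (basis_vec n)" using basis_vec_l2 by blast
  show ?thesis
  proof (intro equalityI subsetI)
    fix y assume "y \<in> {op_norm Y | Y. Y \<in> KCah \<and> op_eq (op_comm Y b) (op_comm X b)}"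
    then obtain Y where Y: "Y \<in> KCah" and com: "op_eq (op_comm Y b) (op_comm X b)" and y: "y = op_norm Y" by blast
    have Yp: "bounded_op Y" "KC_op Y" "antiherm_op Y" using Y unfolding KCah_def by auto
    define D where "D = op_sub X Y"
    have Db: "bounded_op D" unfolding D_def by (rule bop_subI[OF Xp(1) Yp(1)])
    have Dd: "diag_op D"
    proof (rule diag_opI[OF Db, of "\<lambda>i. D (basis_vec i) i"])
      fix i
      let ?e = "basis_vec i"
      let ?\<beta> = "\<lambda>k. b (basis_vec k) k"
      define bi where "bi = b (basis_vec i) i"
      have be: "b ?e = (\<lambda>n. bi * ?e n)" unfolding bi_def by (rule diag_basis[OF bd])
      have Ye: "l2 (Y ?e)" and Xe: "l2 (X ?e)" using bop_l2 Xp(1) Yp(1) el by blast+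
      have c: "op_comm Y b ?e = op_comm X b ?e" by (rule op_eqD[OF com el])
      have zero: "D ?e k = 0" if k: "k \<noteq> i" for k
      proof -
        have "op_comm Y b ?e k = op_comm X b ?e k" using c by simp
        hence "Y (b ?e) k - b (Y ?e) k = X (b ?e) k - b (X ?e) k"
          by (simp add: op_comm_def op_sub_def)
        moreover have "Y (b ?e) k = bi * Y ?e k" unfolding be bop_scale[OF Yp(1) el] by simp
        moreover have "X (b ?e) k = bi * X ?e k" unfolding be bop_scale[OF Xp(1) el] by simp
        moreover have "b (Y ?e) k = ?\<beta> k * Y ?e k" by (rule selfadj_pointwise[OF bd bs Ye])
        moreover have "b (X ?e) k = ?\<beta> k * X ?e k" by (rule selfadj_pointwise[OF bd bs Xe])
        ultimately have "bi * Y ?e k - ?\<beta> k * Y ?e k = bi * X ?e k - ?\<beta> k * X ?e k" by simp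
        hence "(bi - ?\<beta> k) * (X ?e k - Y ?e k) = 0" by (simp add: algebra_simps)
        moreover have "bi - ?\<beta> k \<noteq> 0" using dist k unfolding bi_def by auto
        ultimately show ?thesis by (simp add: D_def op_sub_def)
      qed
      show "D ?e = (\<lambda>n. D ?e i * ?e n)"
      proof (rule ext)
        fix n show "D ?e n = D ?e i * ?e n"
        proof (cases "n = i")
          case True thus ?thesis by (simp add: basis_vec_def)
        next
          case False
          have "?e n = 0" using False by (simp add: basis_vec_def)
          thus ?thesis using zero[OF False] by simp
        qed
      qed
    qed
    have DKC: "D \<in> DKCah" unfolding DKCah_def D_def
      using Dd KC_sub[OF Xp(2) Yp(2)] antiherm_sub[OF Xp(1) Xp(3) Yp(1) Yp(3)] unfolding D_def by blast
    have "op_sub X D = Y" unfolding D_def by (intro ext) (simp add: op_sub_def)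
    hence "y = op_norm (op_sub X D)" using y by simp
    thus "y \<in> (\<lambda>D. op_norm (op_sub X D)) ` DKCah" using DKC by (rule image_eqI)
  next
    fix y assume "y \<in> (\<lambda>D. op_norm (op_sub X D)) ` DKCah"
    then obtain D where D: "D \<in> DKCah" and y: "y = op_norm (op_sub X D)" by blast
    have Dp: "diag_op D" "KC_op D" "antiherm_op D" using D unfolding DKCah_def by auto
    have Db: "bounded_op D" using Dp(1) by (rule diag_bop)
    define Y where "Y = op_sub X D"
    have "Y \<in> KCah" unfolding KCah_def Y_def
      using bop_subI[OF Xp(1) Db] KC_sub[OF Xp(2) Dp(2)] antiherm_sub[OF Xp(1) Xp(3) Db Dp(3)] by blast
    moreover have "op_eq (op_comm Y b) (op_comm X b)"
    proof (rule op_eqI)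
      fix x assume x: "l2 x"
      have bx: "l2 (b x)" using bop_l2[OF bb x] .
      have "b (Y x) = (\<lambda>n. b (X x) n - b (D x) n)"
        unfolding Y_def op_sub_def by (rule bop_diff[OF bb bop_l2[OF Xp(1) x] bop_l2[OF Db x]])
      moreover have "D (b x) = b (D x)" by (rule comm_diag[OF bd bs Dp(1) Dp(3) x])
      ultimately show "op_comm Y b x = op_comm X b x"
        by (simp add: op_comm_def op_sub_def Y_def)
    qed
    ultimately show "y \<in> {op_norm Y | Y. Y \<in> KCah \<and> op_eq (op_comm Y b) (op_comm X b)}"
      using y Y_def by blast
  qed
qed




lemma c_imag: "Re c = 0 \<Longrightarrow> c = \<i> * complex_of_real (Im c)"
  by (simp add: complex_eq_iff)

lemma DKah_neg: assumes d: "d \<in> DKah" shows "(\<lambda>x n. - d x n) \<in> DKah"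
proof -
  have dp: "diag_op d" "compact_op d" "antiherm_op d" "bounded_op d" using DKah_D[OF d] by auto
  have "diag_op (\<lambda>x n. - d x n)" by (rule diag_neg[OF dp(1)])
  moreover have "compact_op (\<lambda>x n. - d x n)" by (rule compact_neg[OF dp(2)])
  moreover have "antiherm_op (\<lambda>x n. - d x n)" by (rule antiherm_neg[OF dp(4) dp(3)])
  ultimately show ?thesis unfolding DKah_def by blast
qed

lemma A1_eq: "(\<lambda>d. op_norm (op_sub K' d)) ` DKah = (\<lambda>d. op_norm (op_add K' d)) ` DKah"
proof -
  have e: "op_sub K' d = op_add K' (\<lambda>x n. - d x n)" for d by (rule op_sub_as_add)
  have e2: "op_add K' d = op_sub K' (\<lambda>x n. - d x n)" for d by (intro ext) (simp add: op_add_def op_sub_def)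
  show ?thesis
  proof (intro equalityI subsetI)
    fix y assume "y \<in> (\<lambda>d. op_norm (op_sub K' d)) ` DKah"
    then obtain d where d: "d \<in> DKah" and y: "y = op_norm (op_sub K' d)" by blast
    have "y = op_norm (op_add K' (\<lambda>x n. - d x n))" using y e[of d] by simp
    thus "y \<in> (\<lambda>d. op_norm (op_add K' d)) ` DKah" using DKah_neg[OF d] by (rule image_eqI)
  next
    fix y assume "y \<in> (\<lambda>d. op_norm (op_add K' d)) ` DKah"
    then obtain d where d: "d \<in> DKah" and y: "y = op_norm (op_add K' d)" by blast
    have "y = op_norm (op_sub K' (\<lambda>x n. - d x n))" using y e2[of d] by simp
    thus "y \<in> (\<lambda>d. op_norm (op_sub K' d)) ` DKah" using DKah_neg[OF d] by (rule image_eqI)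
  qed
qed

lemma A3_eq:
  assumes eq: "op_eq X (op_add K' (op_scalar c))" and re: "Re c = 0"
  shows "(\<lambda>D. op_norm (op_sub X D)) ` DBah = (\<lambda>D. op_norm (op_add K' D)) ` DBah"
proof -
  define s where "s = op_scalar c"
  have sd: "diag_op s" unfolding s_def by (rule diag_scalar)
  have sb: "bounded_op s" unfolding s_def by (rule bop_scalar)
  have sa: "antiherm_op s" unfolding s_def using antiherm_scalar[of "Im c"] c_imag[OF re] by simp
  have m1: "op_sub s D \<in> DBah" if D: "D \<in> DBah" for D
  proof -
    have Dp: "diag_op D" "antiherm_op D" "bounded_op D" using DBah_D[OF D] by auto
    have "diag_op (op_sub s D)" by (rule diag_sub[OF sd Dp(1)])
    moreover have "antiherm_op (op_sub s D)" by (rule antiherm_sub[OF sb sa Dp(3) Dp(2)])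
    ultimately show ?thesis unfolding DBah_def by blast
  qed
  have n1: "op_norm (op_sub X D) = op_norm (op_add K' (op_sub s D))" for D
  proof (rule op_norm_cong, rule op_eqI)
    fix x assume x: "l2 x"
    have "X x = op_add K' (op_scalar c) x" by (rule op_eqD[OF eq x])
    thus "op_sub X D x = op_add K' (op_sub s D) x"
      by (simp add: op_add_def op_sub_def s_def op_scalar_def add_diff_eq)
  qed
  have n2: "op_norm (op_add K' D) = op_norm (op_sub X (op_sub s D))" for D
  proof (rule op_norm_cong, rule op_eqI)
    fix x assume x: "l2 x"
    have "X x = op_add K' (op_scalar c) x" by (rule op_eqD[OF eq x])
    thus "op_add K' D x = op_sub X (op_sub s D) x"
      by (simp add: op_add_def op_sub_def s_def op_scalar_def)
  qed
  show ?thesis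
  proof (intro equalityI subsetI)
    fix y assume "y \<in> (\<lambda>D. op_norm (op_sub X D)) ` DBah"
    then obtain D where D: "D \<in> DBah" and y: "y = op_norm (op_sub X D)" by blast
    have "y = op_norm (op_add K' (op_sub s D))" using y n1 by simp
    thus "y \<in> (\<lambda>D. op_norm (op_add K' D)) ` DBah" using m1[OF D] by (rule image_eqI)
  next
    fix y assume "y \<in> (\<lambda>D. op_norm (op_add K' D)) ` DBah"
    then obtain D where D: "D \<in> DBah" and y: "y = op_norm (op_add K' D)" by blast
    have "y = op_norm (op_sub X (op_sub s D))" using y n2 by simp
    thus "y \<in> (\<lambda>D. op_norm (op_sub X D)) ` DBah" using m1[OF D] by (rule image_eqI)
  qed
qed

lemma A2_eq:
  assumes eq: "op_eq X (op_add K' (op_scalar c))" and re: "Re c = 0"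
  shows "(\<lambda>D. op_norm (op_sub X D)) ` DKCah =
         (\<lambda>(d, \<theta>::real). op_norm
              (op_add (op_add (op_add K' (op_scalar (\<i> * complex_of_real (Im c)))) d)
                      (op_scalar (\<i> * complex_of_real \<theta>)))) ` (DKah \<times> UNIV)"
proof (intro equalityI subsetI)
  fix y assume "y \<in> (\<lambda>D. op_norm (op_sub X D)) ` DKCah"
  then obtain D where D: "D \<in> DKCah" and y: "y = op_norm (op_sub X D)" by blast
  have Dp: "diag_op D" "KC_op D" "antiherm_op D" using D unfolding DKCah_def by auto
  have Db: "bounded_op D" using Dp(1) by (rule diag_bop)
  obtain K3 c3 where K3: "compact_op K3" and eq3: "op_eq D (op_add K3 (op_scalar c3))"
    using Dp(2) unfolding KC_op_def by blast
  have re3: "Re c3 = 0" by (rule re_zero[OF Db Dp(3) K3 eq3])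
  have K3a: "antiherm_op K3" by (rule antiherm_from_scalar[OF Db Dp(3) compact_bop[OF K3] eq3 re3])
  have K3d: "diag_op K3"
  proof (rule diag_opI[OF compact_bop[OF K3], of "\<lambda>i. D (basis_vec i) i - c3"])
    fix i
    have el: "l2 (basis_vec i)" using basis_vec_l2 by blast
    have "D (basis_vec i) = (\<lambda>n. K3 (basis_vec i) n + c3 * basis_vec i n)"
      using op_eqD[OF eq3 el] by (simp add: op_add_def op_scalar_def)
    hence "K3 (basis_vec i) = (\<lambda>n. D (basis_vec i) n - c3 * basis_vec i n)" by auto
    also have "\<dots> = (\<lambda>n. D (basis_vec i) i * basis_vec i n - c3 * basis_vec i n)"
      by (subst diag_basis[OF Dp(1)]) (rule refl)
    finally show "K3 (basis_vec i) = (\<lambda>n. (D (basis_vec i) i - c3) * basis_vec i n)"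
      by (simp add: algebra_simps)
  qed
  have K3in: "K3 \<in> DKah" unfolding DKah_def using K3 K3a K3d by blast
  have "op_norm (op_sub X D) = op_norm (op_add (op_add (op_add K' (op_scalar (\<i> * complex_of_real (Im c)))) (\<lambda>x n. - K3 x n))
                      (op_scalar (\<i> * complex_of_real (- Im c3))))"
  proof (rule op_norm_cong, rule op_eqI)
    fix x assume x: "l2 x"
    show "op_sub X D x = op_add (op_add (op_add K' (op_scalar (\<i> * complex_of_real (Im c)))) (\<lambda>x n. - K3 x n))
                      (op_scalar (\<i> * complex_of_real (- Im c3))) x"
      using op_eqD[OF eq x] op_eqD[OF eq3 x] c_imag[OF re] c_imag[OF re3]
      by (simp add: op_add_def op_sub_def op_scalar_def algebra_simps)
  qed
  thus "y \<in> (\<lambda>(d, \<theta>::real). op_norm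
              (op_add (op_add (op_add K' (op_scalar (\<i> * complex_of_real (Im c)))) d)
                      (op_scalar (\<i> * complex_of_real \<theta>)))) ` (DKah \<times> UNIV)"
    using y DKah_neg[OF K3in] by (auto intro!: image_eqI[where x="((\<lambda>x n. - K3 x n), - Im c3)"])
next
  fix y assume "y \<in> (\<lambda>(d, \<theta>::real). op_norm
              (op_add (op_add (op_add K' (op_scalar (\<i> * complex_of_real (Im c)))) d)
                      (op_scalar (\<i> * complex_of_real \<theta>)))) ` (DKah \<times> UNIV)"
  then obtain d \<theta> where d: "d \<in> DKah" and y: "y = op_norm
              (op_add (op_add (op_add K' (op_scalar (\<i> * complex_of_real (Im c)))) d)
                      (op_scalar (\<i> * complex_of_real \<theta>)))" by fastforce
  have dp: "diag_op d" "compact_op d" "antiherm_op d" "bounded_op d" using DKah_D[OF d] by auto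
  define D where "D = op_add (\<lambda>x n. - d x n) (op_scalar (\<i> * complex_of_real (-\<theta>)))"
  have "diag_op D" unfolding D_def using dp by (intro diag_add diag_neg diag_scalar)
  moreover have "KC_op D" unfolding KC_op_def D_def
    using compact_neg[OF dp(2)] by (auto simp: op_eq_def)
  moreover have "antiherm_op D" unfolding D_def using dp
    by (intro antiherm_add bop_neg antiherm_neg antiherm_scalar bop_scalar)
  ultimately have DK: "D \<in> DKCah" unfolding DKCah_def by blast
  have "op_norm (op_add (op_add (op_add K' (op_scalar (\<i> * complex_of_real (Im c)))) d)
                      (op_scalar (\<i> * complex_of_real \<theta>))) = op_norm (op_sub X D)"
  proof (rule op_norm_cong, rule op_eqI)
    fix x assume x: "l2 x"
    show "op_add (op_add (op_add K' (op_scalar (\<i> * complex_of_real (Im c)))) d)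
                      (op_scalar (\<i> * complex_of_real \<theta>)) x = op_sub X D x"
      using op_eqD[OF eq x] c_imag[OF re]
      by (simp add: D_def op_add_def op_sub_def op_scalar_def algebra_simps)
  qed
  thus "y \<in> (\<lambda>D. op_norm (op_sub X D)) ` DKCah" using y DK by blast
qed

theorem mainTheorem11:
  shows "(\<forall>K (t::real). K \<in> Kah \<longrightarrow>
      Inf ((\<lambda>D. op_norm (op_add K D)) ` DBah)
        = Inf ((\<lambda>(d, \<theta>::real). op_norm
              (op_add (op_add (op_add K (op_scalar (\<i> * complex_of_real t))) d)
                      (op_scalar (\<i> * complex_of_real \<theta>)))) ` (DKah \<times> UNIV))
    \<and> Inf ((\<lambda>(d, \<theta>::real). op_norm
              (op_add (op_add (op_add K (op_scalar (\<i> * complex_of_real t))) d)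
                      (op_scalar (\<i> * complex_of_real \<theta>)))) ` (DKah \<times> UNIV))
        = Inf ((\<lambda>d. op_norm (op_add K d)) ` DKah))
   \<and>
   (\<forall>b X. compact_op b \<and> selfadj_op b \<and> diag_op b \<and>
      (\<forall>i j. i \<noteq> j \<longrightarrow> b (basis_vec i) i \<noteq> b (basis_vec j) j) \<and>
      X \<in> KCah \<longrightarrow>
      (\<forall>K' c. compact_op K' \<and> op_eq X (op_add K' (op_scalar c)) \<longrightarrow>
          finsler_norm b (op_comm X b) = Inf ((\<lambda>d. op_norm (op_sub K' d)) ` DKah))
      \<and> finsler_norm b (op_comm X b) = Inf ((\<lambda>D. op_norm (op_sub X D)) ` DKCah)
      \<and> finsler_norm b (op_comm X b) = Inf ((\<lambda>D. op_norm (op_sub X D)) ` DBah))"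
proof (intro conjI allI impI)
  fix K and t :: real assume K: "K \<in> Kah"
  show "Inf ((\<lambda>D. op_norm (op_add K D)) ` DBah)
        = Inf ((\<lambda>(d, \<theta>::real). op_norm
              (op_add (op_add (op_add K (op_scalar (\<i> * complex_of_real t))) d)
                      (op_scalar (\<i> * complex_of_real \<theta>)))) ` (DKah \<times> UNIV))"
    using part1[OF K, of t] by blast
  show "Inf ((\<lambda>(d, \<theta>::real). op_norm
              (op_add (op_add (op_add K (op_scalar (\<i> * complex_of_real t))) d)
                      (op_scalar (\<i> * complex_of_real \<theta>)))) ` (DKah \<times> UNIV))
        = Inf ((\<lambda>d. op_norm (op_add K d)) ` DKah)"
    using part1[OF K, of t] by blast
next
  fix b X
  assume h: "compact_op b \<and> selfadj_op b \<and> diag_op b \<and>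
      (\<forall>i j. i \<noteq> j \<longrightarrow> b (basis_vec i) i \<noteq> b (basis_vec j) j) \<and> X \<in> KCah"
  have X: "X \<in> KCah" using h by blast
  have fs: "finsler_norm b (op_comm X b) = Inf ((\<lambda>D. op_norm (op_sub X D)) ` DKCah)"
    unfolding finsler_norm_def using finsler_set[of b X] h by simp
  have gen: "Inf ((\<lambda>D. op_norm (op_sub X D)) ` DKCah) = Inf ((\<lambda>d. op_norm (op_add K' d)) ` DKah)
           \<and> Inf ((\<lambda>D. op_norm (op_sub X D)) ` DKCah) = Inf ((\<lambda>D. op_norm (op_sub X D)) ` DBah)"
    if K': "compact_op K'" and eq: "op_eq X (op_add K' (op_scalar c))" for K' c
  proof -
    have dc: "Re c = 0 \<and> K' \<in> Kah" by (rule KCah_decomp[OF X K' eq])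
    note p = part1[OF dc[THEN conjunct2], of "Im c"]
    show ?thesis
      unfolding A2_eq[OF eq dc[THEN conjunct1]] A3_eq[OF eq dc[THEN conjunct1]] using p by simp
  qed
  show "finsler_norm b (op_comm X b) = Inf ((\<lambda>D. op_norm (op_sub X D)) ` DKCah)" by (rule fs)
  fix K' c assume kc: "compact_op K' \<and> op_eq X (op_add K' (op_scalar c))"
  show "finsler_norm b (op_comm X b) = Inf ((\<lambda>d. op_norm (op_sub K' d)) ` DKah)"
    unfolding fs A1_eq using gen kc by blast
next
  fix b X
  assume h: "compact_op b \<and> selfadj_op b \<and> diag_op b \<and>
      (\<forall>i j. i \<noteq> j \<longrightarrow> b (basis_vec i) i \<noteq> b (basis_vec j) j) \<and> X \<in> KCah"
  have X: "X \<in> KCah" using h by blast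
  have fs: "finsler_norm b (op_comm X b) = Inf ((\<lambda>D. op_norm (op_sub X D)) ` DKCah)"
    unfolding finsler_norm_def using finsler_set[of b X] h by simp
  obtain K0 c0 where K0: "compact_op K0" "op_eq X (op_add K0 (op_scalar c0))"
    using X unfolding KCah_def KC_op_def by blast
  have dc: "Re c0 = 0 \<and> K0 \<in> Kah" by (rule KCah_decomp[OF X K0])
  note p = part1[OF dc[THEN conjunct2], of "Im c0"]
  show "finsler_norm b (op_comm X b) = Inf ((\<lambda>D. op_norm (op_sub X D)) ` DBah)"
    unfolding fs A2_eq[OF K0(2) dc[THEN conjunct1]] A3_eq[OF K0(2) dc[THEN conjunct1]] using p by simp
qed


end
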